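(* Let $A$ be a uT-algebra which is weakly $\sigma^*$-compact-regular. Let $B$ be a locally convex algebra with jointly continuous multiplication, and let $\Phi: A\to B$ be an injective algebra homomorphism such that $C:=\overline{\operatorname{Im}\Phi}$ (closure in $B$, with the induced topology) is a Q-algebra. Then the following are equivalent: (1) $\Phi^{-1}|_{\operatorname{Im}\Phi}:\operatorname{Im}\Phi\to A$ is continuous, where $\operatorname{Im}\Phi$ carries the topology induced by $B$; (2) $\operatorname{Im}\Phi\cap SR(C)=\{0\}$; (3) the map $\Phi^{**}: M(C)\to M^*(A)$, $\Phi^{**}(f)=f\circ\Phi$, is surjective.
   Context: All algebras are complex, commutative and have a unit. A topological algebra is an algebra that is also a Hausdorff topological vector space in which multiplication is separately continuous; a locally convex algebra is a topological algebra whose topology is locally convex. A uniform seminorm on an algebra is a seminorm $p$ with $p(x^2)=p(x)^2$ for all $x$; a uT-algebra is a topological algebra whose topology is determined by a family of uniform seminorms. For an algebra $A$, $M^*(A)$ is the set of all nonzero multiplicative linear functionals on $A$ (with the weak* topology); for a topological algebra $A$, $M(A)$ is the set of nonzero continuous multiplicative linear functionals. A topological algebra is a Q-algebra if its set of invertible elements is open. A topological algebra $A$ is weakly $\sigma^*$-compact-regular if for every compact subset $K\subsetneq M^*(A)$ there is a nonzero $x\in A$ with $f(x)=0$ for all $f\in K$. For a topological algebra $C$ with $M(C)\neq\emptyset$, the strong radical is $SR(C)=\{x\in C : f(x)=0 \text{ for all } f\in M(C)\}$. *)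

theory Defs
  imports "HOL-Analysis.Analysis"
begin

text \<open>A complex commutative unital algebra: the ring structure is the type class
  comm_ring_1; the complex scalar multiplication is given explicitly as sm.\<close>
definition calg :: "(complex \<Rightarrow> 'a::comm_ring_1 \<Rightarrow> 'a) \<Rightarrow> bool" where
  "calg sm \<longleftrightarrow>
     (\<forall>c x y. sm c (x + y) = sm c x + sm c y) \<and>
     (\<forall>c d x. sm (c + d) x = sm c x + sm d x) \<and>
     (\<forall>c d x. sm (c * d) x = sm c (sm d x)) \<and>
     (\<forall>x. sm 1 x = x) \<and>
     (\<forall>c x y. sm c (x * y) = sm c x * y)"

definition top_alg :: "(complex \<Rightarrow> 'a::comm_ring_1 \<Rightarrow> 'a) \<Rightarrow> 'a topology \<Rightarrow> bool" where
  "top_alg sm T \<longleftrightarrow>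
     calg sm \<and> topspace T = UNIV \<and> Hausdorff_space T \<and>
     continuous_map (prod_topology T T) T (\<lambda>(x, y). x + y) \<and>
     continuous_map (prod_topology euclidean T) T (\<lambda>(c, x). sm c x) \<and>
     (\<forall>a. continuous_map T T (\<lambda>x. a * x))"

definition seminorm :: "(complex \<Rightarrow> 'a::comm_ring_1 \<Rightarrow> 'a) \<Rightarrow> ('a \<Rightarrow> real) \<Rightarrow> bool" where
  "seminorm sm p \<longleftrightarrow>
     (\<forall>x. 0 \<le> p x) \<and> (\<forall>x y. p (x + y) \<le> p x + p y) \<and> (\<forall>c x. p (sm c x) = cmod c * p x)"

definition uniform_seminorm :: "(complex \<Rightarrow> 'a::comm_ring_1 \<Rightarrow> 'a) \<Rightarrow> ('a \<Rightarrow> real) \<Rightarrow> bool" where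
  "uniform_seminorm sm p \<longleftrightarrow> seminorm sm p \<and> (\<forall>x. p (x * x) = (p x)^2)"

definition determined_by :: "'a::comm_ring_1 topology \<Rightarrow> ('a \<Rightarrow> real) set \<Rightarrow> bool" where
  "determined_by T P \<longleftrightarrow>
     (\<forall>U. openin T U \<longleftrightarrow>
        (\<forall>x\<in>U. \<exists>F e. finite F \<and> F \<subseteq> P \<and> e > 0 \<and> {y. \<forall>p\<in>F. p (y - x) < e} \<subseteq> U))"

definition locally_convex_alg :: "(complex \<Rightarrow> 'a::comm_ring_1 \<Rightarrow> 'a) \<Rightarrow> 'a topology \<Rightarrow> bool" where
  "locally_convex_alg sm T \<longleftrightarrow>
     top_alg sm T \<and> (\<exists>P. (\<forall>p\<in>P. seminorm sm p) \<and> determined_by T P)"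

definition uT_alg :: "(complex \<Rightarrow> 'a::comm_ring_1 \<Rightarrow> 'a) \<Rightarrow> 'a topology \<Rightarrow> bool" where
  "uT_alg sm T \<longleftrightarrow>
     top_alg sm T \<and> (\<exists>P. (\<forall>p\<in>P. uniform_seminorm sm p) \<and> determined_by T P)"

definition Mstar :: "(complex \<Rightarrow> 'a::comm_ring_1 \<Rightarrow> 'a) \<Rightarrow> ('a \<Rightarrow> complex) set" where
  "Mstar sm = {f. (\<forall>x y. f (x + y) = f x + f y) \<and> (\<forall>c x. f (sm c x) = c * f x) \<and>
                  (\<forall>x y. f (x * y) = f x * f y) \<and> (\<exists>x. f x \<noteq> 0)}"

definition weak_star :: "(complex \<Rightarrow> 'a::comm_ring_1 \<Rightarrow> 'a) \<Rightarrow> ('a \<Rightarrow> complex) topology" where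
  "weak_star sm = subtopology (product_topology (\<lambda>_. euclidean) UNIV) (Mstar sm)"

definition weakly_sigma_star_compact_regular ::
    "(complex \<Rightarrow> 'a::comm_ring_1 \<Rightarrow> 'a) \<Rightarrow> bool" where
  "weakly_sigma_star_compact_regular sm \<longleftrightarrow>
     (\<forall>K. compactin (weak_star sm) K \<and> K \<subset> Mstar sm \<longrightarrow>
        (\<exists>x. x \<noteq> 0 \<and> (\<forall>f\<in>K. f x = 0)))"

text \<open>Continuous nonzero multiplicative linear functionals on a subalgebra C of an
  algebra (with the induced topology); functionals are represented by functions on
  the ambient type, only their values on C matter.\<close>
definition M_sub :: "(complex \<Rightarrow> 'b::comm_ring_1 \<Rightarrow> 'b) \<Rightarrow> 'b topology \<Rightarrow> 'b set \<Rightarrow> ('b \<Rightarrow> complex) set" where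
  "M_sub sm T C = {f. (\<forall>x\<in>C. \<forall>y\<in>C. f (x + y) = f x + f y) \<and> (\<forall>c. \<forall>x\<in>C. f (sm c x) = c * f x) \<and>
                      (\<forall>x\<in>C. \<forall>y\<in>C. f (x * y) = f x * f y) \<and> (\<exists>x\<in>C. f x \<noteq> 0) \<and>
                      continuous_map (subtopology T C) euclidean f}"

definition strong_radical :: "(complex \<Rightarrow> 'b::comm_ring_1 \<Rightarrow> 'b) \<Rightarrow> 'b topology \<Rightarrow> 'b set \<Rightarrow> 'b set" where
  "strong_radical sm T C = {x\<in>C. \<forall>f\<in>M_sub sm T C. f x = 0}"

definition Q_sub :: "'b::comm_ring_1 topology \<Rightarrow> 'b set \<Rightarrow> bool" where
  "Q_sub T C \<longleftrightarrow> openin (subtopology T C) {x\<in>C. \<exists>y\<in>C. x * y = 1}"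

definition alg_hom :: "(complex \<Rightarrow> 'a::comm_ring_1 \<Rightarrow> 'a) \<Rightarrow> (complex \<Rightarrow> 'b::comm_ring_1 \<Rightarrow> 'b)
    \<Rightarrow> ('a \<Rightarrow> 'b) \<Rightarrow> bool" where
  "alg_hom smA smB \<Phi> \<longleftrightarrow>
     (\<forall>x y. \<Phi> (x + y) = \<Phi> x + \<Phi> y) \<and> (\<forall>c x. \<Phi> (smA c x) = smB c (\<Phi> x)) \<and>
     (\<forall>x y. \<Phi> (x * y) = \<Phi> x * \<Phi> y) \<and> \<Phi> 1 = 1"

end

theory Submission
  imports Defs "HOL-Computational_Algebra.Polynomial"
begin



lemma calg_sm0: "calg sm \<Longrightarrow> sm 0 x = 0"
proof -
  assume c: "calg sm"
  have "sm (0+0) x = sm 0 x + sm 0 x" using c unfolding calg_def by blast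
  then show ?thesis by simp
qed

lemma calg_sm_1mult: "calg sm \<Longrightarrow> sm c x = sm c 1 * x"
proof -
  assume c: "calg sm"
  have "sm c (1 * x) = sm c 1 * x" using c unfolding calg_def by blast
  then show ?thesis by simp
qed

lemma calg_add: "calg sm \<Longrightarrow> sm c (x + y) = sm c x + sm c y"
  unfolding calg_def by blast
lemma calg_add2: "calg sm \<Longrightarrow> sm (c + d) x = sm c x + sm d x"
  unfolding calg_def by blast
lemma calg_assoc: "calg sm \<Longrightarrow> sm (c * d) x = sm c (sm d x)"
  unfolding calg_def by blast
lemma calg_one: "calg sm \<Longrightarrow> sm 1 x = x"
  unfolding calg_def by blast
lemma calg_multl: "calg sm \<Longrightarrow> sm c (x * y) = sm c x * y"
  unfolding calg_def by blast
lemma calg_multr: "calg sm \<Longrightarrow> sm c (x * y) = x * sm c y"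
  using calg_multl[of sm c y x] by (simp add: mult.commute)

lemma calg_x0: "calg sm \<Longrightarrow> sm c 0 = 0"
  using calg_sm_1mult[of sm c 0] by simp

lemma calg_neg1: "calg sm \<Longrightarrow> sm (-1) x = - x"
proof -
  assume c: "calg sm"
  have "sm 0 x = x + sm (-1) x" using calg_add2[OF c, of 1 "-1" x] calg_one[OF c] by simp
  then have "x + sm (-1) x = 0" using calg_sm0[OF c] by simp
  from add.inverse_unique[OF this] show ?thesis by simp
qed

lemma calg_neg: "calg sm \<Longrightarrow> sm c (- x) = - sm c x"
  using calg_sm_1mult[of sm c "-x"] calg_sm_1mult[of sm c x] by simp

lemma calg_diff: "calg sm \<Longrightarrow> sm c (x - y) = sm c x - sm c y"
  using calg_sm_1mult[of sm c "x - y"] calg_sm_1mult[of sm c x] calg_sm_1mult[of sm c y]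
  by (simp add: algebra_simps)

lemma calg_diff2: "calg sm \<Longrightarrow> sm (c - d) x = sm c x - sm d x"
proof -
  assume c: "calg sm"
  have "sm (-d) x = sm (-1) (sm d x)" using calg_assoc[OF c, of "-1" d x] by simp
  then have "sm (-d) x = - sm d x" using calg_neg1[OF c] by simp
  moreover have "sm (c + -d) x = sm c x + sm (-d) x" using calg_add2[OF c] by blast
  ultimately show ?thesis by simp
qed

lemma calg_e_mult: "calg sm \<Longrightarrow> sm (c * d) 1 = sm c 1 * sm d 1"
  using calg_assoc[of sm c d 1] calg_sm_1mult[of sm c "sm d 1"] by simp

lemma sn_nonneg: "seminorm sm p \<Longrightarrow> 0 \<le> p x" unfolding seminorm_def by blast
lemma sn_tri: "seminorm sm p \<Longrightarrow> p (x + y) \<le> p x + p y" unfolding seminorm_def by blast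
lemma sn_hom: "seminorm sm p \<Longrightarrow> p (sm c x) = cmod c * p x" unfolding seminorm_def by blast

lemma sn_zero: "calg sm \<Longrightarrow> seminorm sm p \<Longrightarrow> p 0 = 0"
  using sn_hom[of sm p 0 0] calg_sm0[of sm 0] by simp

lemma sn_neg: "calg sm \<Longrightarrow> seminorm sm p \<Longrightarrow> p (- x) = p x"
  using sn_hom[of sm p "-1" x] calg_neg1[of sm x] by simp

lemma sn_diff: "calg sm \<Longrightarrow> seminorm sm p \<Longrightarrow> p (x - y) \<le> p x + p y"
  using sn_tri[of sm p x "-y"] sn_neg[of sm p y] by simp

lemma sn_diff_sym: "calg sm \<Longrightarrow> seminorm sm p \<Longrightarrow> p (x - y) = p (y - x)"
  using sn_neg[of sm p "y - x"] by simp

lemma sn_rev_tri: "calg sm \<Longrightarrow> seminorm sm p \<Longrightarrow> \<bar>p x - p y\<bar> \<le> p (x - y)"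
proof -
  assume c: "calg sm" and s: "seminorm sm p"
  have "p x \<le> p (x - y) + p y" using sn_tri[OF s, of "x - y" y] by simp
  moreover have "p y \<le> p (y - x) + p x" using sn_tri[OF s, of "y - x" x] by simp
  ultimately show ?thesis using sn_diff_sym[OF c s, of x y] by linarith
qed

lemma sn_tri3: "calg sm \<Longrightarrow> seminorm sm p \<Longrightarrow> p (x - z) \<le> p (x - y) + p (y - z)"
  using sn_tri[of sm p "x - y" "y - z"] by simp

section \<open>Uniform seminorms are submultiplicative\<close>

lemma us_sn: "uniform_seminorm sm p \<Longrightarrow> seminorm sm p" unfolding uniform_seminorm_def by blast
lemma us_sq: "uniform_seminorm sm p \<Longrightarrow> p (x * x) = (p x)^2" unfolding uniform_seminorm_def by blast

lemma us_half:
  assumes c: "calg sm" and u: "uniform_seminorm sm p"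
  shows "p (x * y) \<le> (p x + p y)^2 / 2"
proof -
  note s = us_sn[OF u]
  have eq: "x * y = sm (1/4) ((x+y)*(x+y) - (x-y)*(x-y))"
  proof -
    define w where "w = x * y"
    have "(x+y)*(x+y) - (x-y)*(x-y) = w + w + w + w" by (simp add: algebra_simps w_def)
    moreover have "sm (1/4) (w+w+w+w) = sm (1/4) w + sm (1/4) w + sm (1/4) w + sm (1/4) w"
      by (simp only: calg_add[OF c])
    moreover have "\<dots> = sm (1/4+1/4+1/4+1/4) w" by (simp only: calg_add2[OF c])
    moreover have "\<dots> = w" using calg_one[OF c] by simp
    ultimately show ?thesis by (simp add: w_def)
  qed
  have "p (x*y) = (1/4) * p ((x+y)*(x+y) - (x-y)*(x-y))"
    by (subst eq, subst sn_hom[OF s], simp)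
  also have "\<dots> \<le> (1/4) * (p ((x+y)*(x+y)) + p ((x-y)*(x-y)))"
    using sn_diff[OF c s] by (intro mult_left_mono) auto
  also have "\<dots> = (1/4) * ((p (x+y))^2 + (p (x-y))^2)" using us_sq[OF u] by simp
  also have "\<dots> \<le> (1/4) * ((p x + p y)^2 + (p x + p y)^2)"
  proof -
    have "(p (x+y))^2 \<le> (p x + p y)^2"
      using sn_tri[OF s] sn_nonneg[OF s] by (intro power_mono) auto
    moreover have "(p (x-y))^2 \<le> (p x + p y)^2"
      using sn_diff[OF c s] sn_nonneg[OF s] by (intro power_mono) auto
    ultimately show ?thesis by simp
  qed
  finally show ?thesis by simp
qed

lemma us_two:
  assumes c: "calg sm" and u: "uniform_seminorm sm p"
  shows "p (x * y) \<le> 2 * p x * p y"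
proof -
  note s = us_sn[OF u]
  have sc: "p (x * y) \<le> (t * p x + p y / t)^2 / 2" if "t > 0" for t :: real
  proof -
    have "x * y = sm (complex_of_real t) x * sm (complex_of_real (1/t)) y"
    proof -
      have "sm (complex_of_real t) x * sm (complex_of_real (1/t)) y
          = sm (complex_of_real t) (sm (complex_of_real (1/t)) (x * y))"
        using calg_multl[OF c] calg_multr[OF c] by metis
      also have "\<dots> = x * y" using calg_assoc[OF c, symmetric] calg_one[OF c] that
        by (simp flip: of_real_mult)
      finally show ?thesis by simp
    qed
    then have "p (x*y) \<le> (p (sm (complex_of_real t) x) + p (sm (complex_of_real (1/t)) y))^2 / 2"
      using us_half[OF c u] by metis
    also have "\<dots> = (t * p x + p y / t)^2 / 2" using that sn_hom[OF s] by (simp add: norm_divide)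
    finally show ?thesis .
  qed
  have px: "0 \<le> p x" and py: "0 \<le> p y" and pxy: "0 \<le> p (x*y)" using sn_nonneg[OF s] by auto
  show ?thesis
  proof (cases "p x > 0 \<and> p y > 0")
    case True
    define t where "t = sqrt (p y / p x)"
    have t: "t > 0" using True by (simp add: t_def)
    have "t * p x = sqrt (p x * p y)" using True
      by (simp add: t_def real_sqrt_divide real_sqrt_mult field_simps)
    moreover have "p y / t = sqrt (p x * p y)" using True t
      by (simp add: t_def real_sqrt_divide real_sqrt_mult field_simps)
    ultimately have "(t * p x + p y / t)^2 / 2 = 2 * p x * p y" using True
      by (simp add: power2_eq_square algebra_simps)
    then show ?thesis using sc[OF t] by simp
  next
    case False
    show ?thesis
    proof (rule ccontr)
      assume "\<not> ?thesis"
      then have pos: "p (x*y) > 0" using False px py by auto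
      have "p x = 0 \<or> p y = 0" using False px py by auto
      then show False
      proof
        assume "p x = 0"
        define t where "t = (p y + 1) / sqrt (p (x*y))"
        have t: "t > 0" using pos py by (simp add: t_def)
        have "p y / t < sqrt (p (x*y))" using pos py
          by (simp add: t_def field_simps)
        then have "(p y / t)^2 < p (x*y)" using py t pos
          by (metis divide_nonneg_pos power_strict_mono real_sqrt_pow2 less_eq_real_def zero_less_numeral)
        moreover have "p (x*y) \<le> (p y / t)^2 / 2" using sc[OF t] \<open>p x = 0\<close> by simp
        ultimately show False using pos by simp
      next
        assume "p y = 0"
        define t where "t = (p x + 1) / sqrt (p (x*y))"
        have t: "t > 0" using pos px by (simp add: t_def)
        have "p x / t < sqrt (p (x*y))" using pos px
          by (simp add: t_def field_simps)
        then have "(p x / t)^2 < p (x*y)" using px t pos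
          by (metis divide_nonneg_pos power_strict_mono real_sqrt_pow2 less_eq_real_def zero_less_numeral)
        moreover have "p (x*y) \<le> (1/t * p x)^2 / 2"
          using sc[of "1/t"] t \<open>p y = 0\<close> by simp
        ultimately show False using pos by (simp add: field_simps)
      qed
    qed
  qed
qed




lemma us_pow2:
  assumes c: "calg sm" and u: "uniform_seminorm sm p"
  shows "p (w ^ (2^k)) = (p w) ^ (2^k)"
proof (induction k)
  case 0 then show ?case by simp
next
  case (Suc k)
  have "w ^ (2 ^ Suc k) = w ^ (2^k) * w ^ (2^k)"
    by (simp flip: power_add) (simp add: mult_2)
  then have "p (w ^ (2 ^ Suc k)) = (p (w ^ (2^k)))^2" using us_sq[OF u] by simp
  also have "\<dots> = (p w) ^ (2 ^ Suc k)" using Suc by (simp flip: power_mult add: mult.commute)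
  finally show ?case .
qed

lemma us_submult:
  assumes c: "calg sm" and u: "uniform_seminorm sm p"
  shows "p (x * y) \<le> p x * p y"
proof (rule ccontr)
  note s = us_sn[OF u]
  assume neg: "\<not> ?thesis"
  define a where "a = p (x*y)"
  define b where "b = p x * p y"
  have ab: "a > b" using neg by (simp add: a_def b_def)
  have b0: "b \<ge> 0" using sn_nonneg[OF s] by (simp add: b_def)
  have key: "a ^ (2^k) \<le> 2 * b ^ (2^k)" for k
  proof -
    have "a ^ (2^k) = p ((x*y) ^ (2^k))" using us_pow2[OF c u] by (simp add: a_def)
    also have "\<dots> = p (x ^ (2^k) * y ^ (2^k))" by (simp add: power_mult_distrib)
    also have "\<dots> \<le> 2 * p (x ^ (2^k)) * p (y ^ (2^k))" by (rule us_two[OF c u])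
    also have "\<dots> = 2 * b ^ (2^k)" using us_pow2[OF c u] by (simp add: b_def power_mult_distrib)
    finally show ?thesis .
  qed
  show False
  proof (cases "b = 0")
    case True
    then show False using key[of 0] ab by simp
  next
    case False
    then have bp: "b > 0" using b0 by simp
    define r where "r = a / b"
    have r1: "r > 1" using ab bp by (simp add: r_def)
    obtain n where n: "2 < r ^ n" using real_arch_pow[OF r1] by blast
    have "r ^ n \<le> r ^ (2^n)" using r1 by (intro power_increasing) (auto intro: less_imp_le)
    moreover have "r ^ (2^n) \<le> 2"
    proof -
      have "a ^ (2^n) = r ^ (2^n) * b ^ (2^n)" using bp by (simp add: r_def power_divide)
      then show ?thesis using key[of n] bp by simp
    qed
    ultimately show False using n by simp
  qed
qed

lemma us_one: "calg sm \<Longrightarrow> uniform_seminorm sm p \<Longrightarrow> p 1 = 1 \<or> p 1 = 0"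
  using us_sq[of sm p 1] by (simp add: power2_eq_square) blast

lemma us_pow_le: "calg sm \<Longrightarrow> uniform_seminorm sm p \<Longrightarrow> p 1 = 1 \<Longrightarrow> p (w ^ n) \<le> (p w) ^ n"
proof (induction n)
  case 0 then show ?case by simp
next
  case (Suc n)
  have "p (w ^ Suc n) \<le> p w * p (w ^ n)" using us_submult[OF Suc.prems(1,2)] by simp
  also have "\<dots> \<le> p w * (p w)^n" using Suc sn_nonneg[OF us_sn[OF Suc.prems(2)]]
    by (intro mult_left_mono) auto
  finally show ?case by simp
qed

lemma us_pow:
  assumes c: "calg sm" and u: "uniform_seminorm sm p" and p1: "p 1 = 1"
  shows "p (w ^ n) = (p w) ^ n"
proof (rule antisym)
  show "p (w ^ n) \<le> (p w) ^ n" by (rule us_pow_le[OF c u p1])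
  show "(p w) ^ n \<le> p (w ^ n)"
  proof (cases "p w = 0")
    case True
    then show ?thesis using sn_nonneg[OF us_sn[OF u]] p1 by (cases n) auto
  next
    case False
    then have pw: "p w > 0" using sn_nonneg[OF us_sn[OF u], of w] by simp
    define N where "N = (2::nat)^n"
    have nN: "n \<le> N" unfolding N_def by (simp add: less_imp_le)
    have "(p w) ^ N = p (w ^ N)" using us_pow2[OF c u] by (simp add: N_def)
    also have "\<dots> = p (w ^ n * w ^ (N - n))" using nN by (simp flip: power_add)
    also have "\<dots> \<le> p (w ^ n) * p (w ^ (N - n))" by (rule us_submult[OF c u])
    also have "\<dots> \<le> p (w ^ n) * (p w) ^ (N - n)"
      using us_pow_le[OF c u p1] sn_nonneg[OF us_sn[OF u]] by (intro mult_left_mono) auto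
    finally have "(p w) ^ n * (p w) ^ (N - n) \<le> p (w ^ n) * (p w) ^ (N - n)"
      using nN by (simp flip: power_add)
    then show ?thesis using pw by simp
  qed
qed

section \<open>The construction q_a\<close>

definition qa :: "('a::comm_ring_1 \<Rightarrow> real) \<Rightarrow> 'a \<Rightarrow> 'a \<Rightarrow> real" where
  "qa q a y = lim (\<lambda>n. q (a ^ n * y) / q a ^ n)"

lemma qa_basic:
  assumes c: "calg sm" and u: "uniform_seminorm sm q" and pa: "q a > 0"
  shows "(\<lambda>n. q (a ^ n * y) / q a ^ n) \<longlonglongrightarrow> qa q a y"
    and "qa q a y \<le> q (a ^ n * y) / q a ^ n"
proof -
  note s = us_sn[OF u]
  define U where "U = (\<lambda>n. q (a ^ n * y) / q a ^ n)"
  have "decseq U"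
  proof (rule decseq_SucI)
    fix n
    have "q (a ^ Suc n * y) \<le> q a * q (a ^ n * y)"
      using us_submult[OF c u, of a "a ^ n * y"] by (simp add: mult.assoc)
    then show "U (Suc n) \<le> U n" using pa by (simp add: U_def field_simps)
  qed
  moreover have "\<forall>i. 0 \<le> U i" using sn_nonneg[OF s] pa by (simp add: U_def)
  ultimately obtain L where L: "U \<longlonglongrightarrow> L" "\<forall>i. L \<le> U i" by (rule decseq_convergent)
  then have "qa q a y = L" using limI[OF L(1)] by (simp add: qa_def U_def)
  then show "(\<lambda>n. q (a ^ n * y) / q a ^ n) \<longlonglongrightarrow> qa q a y" and "qa q a y \<le> q (a ^ n * y) / q a ^ n"
    using L by (simp_all add: U_def)
qed

lemma qa_us:
  assumes c: "calg sm" and u: "uniform_seminorm sm q" and pa: "q a > 0"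
  shows "uniform_seminorm sm (qa q a)" and "\<And>y. qa q a y \<le> q y"
proof -
  note s = us_sn[OF u]
  note L = qa_basic(1)[OF c u pa]
  show le: "qa q a y \<le> q y" for y using qa_basic(2)[OF c u pa, of y 0] by simp
  have nn: "0 \<le> qa q a y" for y
    using L[of y] sn_nonneg[OF s] pa by (intro LIMSEQ_le_const[OF L[of y]]) auto
  have tri: "qa q a (y + z) \<le> qa q a y + qa q a z" for y z
  proof (rule LIMSEQ_le[OF L[of "y+z"] tendsto_add[OF L[of y] L[of z]]])
    show "\<exists>N. \<forall>n\<ge>N. q (a ^ n * (y + z)) / q a ^ n \<le> q (a ^ n * y) / q a ^ n + q (a ^ n * z) / q a ^ n"
      using sn_tri[OF s] pa by (auto simp: distrib_left add_divide_distrib[symmetric] divide_right_mono)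
  qed
  have hom: "qa q a (sm c' y) = cmod c' * qa q a y" for c' y
  proof -
    have "(\<lambda>n. q (a ^ n * sm c' y) / q a ^ n) = (\<lambda>n. cmod c' * (q (a ^ n * y) / q a ^ n))"
      using calg_multr[OF c, symmetric] sn_hom[OF s] by (simp add: fun_eq_iff)
    then have "(\<lambda>n. q (a ^ n * sm c' y) / q a ^ n) \<longlonglongrightarrow> cmod c' * qa q a y"
      using tendsto_mult_left[OF L[of y]] by simp
    then show ?thesis using L[of "sm c' y"] LIMSEQ_unique by blast
  qed
  have sq: "qa q a (y * y) = (qa q a y)^2" for y
  proof -
    have sm2: "strict_mono (\<lambda>n::nat. 2 * n)" by (simp add: strict_mono_def)
    have "((\<lambda>n. q (a ^ n * (y*y)) / q a ^ n) \<circ> (\<lambda>n. 2*n)) = (\<lambda>n. (q (a ^ n * y) / q a ^ n)^2)"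
    proof
      fix n
      have "a ^ (2*n) * (y*y) = (a^n * y) * (a^n * y)" by (simp add: power_mult mult_ac power2_eq_square)
      then have e1: "q (a ^ (2*n) * (y*y)) = (q (a^n * y))^2" using us_sq[OF u] by simp
      have e2: "q a ^ (2*n) = (q a ^ n)^2" by (simp add: power_mult mult.commute)
      show "((\<lambda>n. q (a ^ n * (y*y)) / q a ^ n) \<circ> (\<lambda>n. 2*n)) n = (q (a ^ n * y) / q a ^ n)^2"
        unfolding comp_def e1 e2 by (simp add: power_divide)
    qed
    moreover have "((\<lambda>n. q (a ^ n * (y*y)) / q a ^ n) \<circ> (\<lambda>n. 2*n)) \<longlonglongrightarrow> qa q a (y*y)"
      by (rule LIMSEQ_subseq_LIMSEQ[OF L sm2])
    ultimately have "(\<lambda>n. (q (a ^ n * y) / q a ^ n)^2) \<longlonglongrightarrow> qa q a (y*y)" by simp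
    moreover have "(\<lambda>n. (q (a ^ n * y) / q a ^ n)^2) \<longlonglongrightarrow> (qa q a y)^2"
      by (rule tendsto_power[OF L])
    ultimately show ?thesis using LIMSEQ_unique by blast
  qed
  show "uniform_seminorm sm (qa q a)"
    unfolding uniform_seminorm_def seminorm_def using nn tri hom sq by blast
qed




definition fam :: "(complex \<Rightarrow> 'a::comm_ring_1 \<Rightarrow> 'a) \<Rightarrow> ('a \<Rightarrow> real) \<Rightarrow> 'a \<Rightarrow> ('a \<Rightarrow> real) set" where
  "fam sm p x = {q. uniform_seminorm sm q \<and> (\<forall>y. q y \<le> p y) \<and> q x = p x}"

lemma fam_min:
  assumes c: "calg sm" and u: "uniform_seminorm sm p"
  shows "\<exists>m\<in>fam sm p x. \<forall>q\<in>fam sm p x. (\<forall>y. q y \<le> m y) \<longrightarrow> q = m"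
proof -
  define F where "F = fam sm p x"
  define P where "P = (\<lambda>(q1::'a \<Rightarrow> real) q2. \<forall>y. q2 y \<le> q1 y)"
  have po: "partial_order_on F (relation_of P F)"
    by (rule partial_order_on_relation_ofI) (auto simp: P_def fun_eq_iff intro: order_trans antisym)
  have pF: "p \<in> F" using u by (simp add: F_def fam_def)
  have ch: "\<exists>u\<in>F. \<forall>a\<in>C. P a u" if C: "C \<in> Chains (relation_of P F)" for C
  proof (cases "C = {}")
    case True then show ?thesis using pF by blast
  next
    case False
    have CF: "C \<subseteq> F" using Chains_relation_of[OF C] .
    have cmp: "\<forall>a\<in>C. \<forall>b\<in>C. P a b \<or> P b a" using C by (auto simp: Chains_def relation_of_def)
    define q0 where "q0 y = (INF q\<in>C. q y)" for y
    have qC: "q \<in> C \<Longrightarrow> uniform_seminorm sm q \<and> (\<forall>y. q y \<le> p y) \<and> q x = p x" for q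
      using CF by (auto simp: F_def fam_def)
    have nnC: "q \<in> C \<Longrightarrow> 0 \<le> q y" for q y using qC sn_nonneg us_sn by blast
    have bdd: "bdd_below ((\<lambda>q. q y) ` C)" for y unfolding bdd_below_def using nnC by blast
    have low: "q \<in> C \<Longrightarrow> q0 y \<le> q y" for q y unfolding q0_def by (rule cINF_lower[OF bdd])
    have great: "(\<And>q. q \<in> C \<Longrightarrow> t \<le> q y) \<Longrightarrow> t \<le> q0 y" for t y
      unfolding q0_def using False by (rule cINF_greatest)
    have nn: "0 \<le> q0 y" for y using nnC by (intro great)
    have tri: "q0 (y + z) \<le> q0 y + q0 z" for y z
    proof -
      have "q0 (y+z) - q1 y \<le> q2 z" if "q1 \<in> C" "q2 \<in> C" for q1 q2
      proof -
        have "(\<forall>y. q2 y \<le> q1 y) \<or> (\<forall>y. q1 y \<le> q2 y)" using cmp that by (auto simp: P_def)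
        then have "\<exists>q\<in>C. q y \<le> q1 y \<and> q z \<le> q2 z"
        proof
          assume "\<forall>y. q2 y \<le> q1 y" then show ?thesis using that by force
        next
          assume "\<forall>y. q1 y \<le> q2 y" then show ?thesis using that by force
        qed
        then obtain q where q: "q \<in> C" "q y \<le> q1 y" "q z \<le> q2 z" by blast
        have "q0 (y+z) \<le> q (y+z)" by (rule low[OF q(1)])
        also have "\<dots> \<le> q y + q z" using qC[OF q(1)] sn_tri us_sn by blast
        finally show ?thesis using q by simp
      qed
      then have "q0 (y+z) - q1 y \<le> q0 z" if "q1 \<in> C" for q1 using that by (intro great) auto
      then have "q0 (y+z) - q0 z \<le> q1 y" if "q1 \<in> C" for q1 using that by force
      then have "q0 (y+z) - q0 z \<le> q0 y" by (intro great) auto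
      then show ?thesis by simp
    qed
    have hom: "q0 (sm c' y) = cmod c' * q0 y" for c' y
    proof (cases "c' = 0")
      case True
      have "q0 (sm c' y) = 0"
        using calg_sm0[OF c] True low[of _ 0] nn[of 0] qC sn_zero[OF c] us_sn False
        by (metis antisym ex_in_conv)
      then show ?thesis using True by simp
    next
      case False
      then have cp: "cmod c' > 0" by simp
      have "q0 (sm c' y) / cmod c' \<le> q y" if "q \<in> C" for q
      proof -
        have "q0 (sm c' y) \<le> cmod c' * q y" using low[OF that, of "sm c' y"] qC[OF that] sn_hom us_sn by metis
        then show ?thesis using cp by (simp add: field_simps)
      qed
      then have a1: "q0 (sm c' y) / cmod c' \<le> q0 y" by (intro great)
      have "cmod c' * q0 y \<le> q (sm c' y)" if "q \<in> C" for q
        using low[OF that, of y] qC[OF that] sn_hom us_sn cp by (metis mult_left_mono less_imp_le)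
      then have a2: "cmod c' * q0 y \<le> q0 (sm c' y)" by (intro great)
      show ?thesis using a1 a2 cp by (simp add: field_simps)
    qed
    have sq: "q0 (y * y) = (q0 y)^2" for y
    proof (rule antisym)
      have "sqrt (q0 (y*y)) \<le> q y" if "q \<in> C" for q
      proof -
        have "q0 (y*y) \<le> (q y)^2" using low[OF that, of "y*y"] qC[OF that] us_sq by metis
        then have "sqrt (q0 (y*y)) \<le> sqrt ((q y)^2)" by (rule real_sqrt_le_mono)
        then show ?thesis using nnC[OF that, of y] by simp
      qed
      then have "sqrt (q0 (y*y)) \<le> q0 y" by (intro great)
      then have "(sqrt (q0 (y*y)))^2 \<le> (q0 y)^2" by (rule power_mono) (simp add: nn)
      then show "q0 (y*y) \<le> (q0 y)^2" using nn[of "y*y"] by simp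
      have "(q0 y)^2 \<le> q (y*y)" if "q \<in> C" for q
        using low[OF that, of y] nn[of y] qC[OF that] us_sq by (metis power_mono)
      then show "(q0 y)^2 \<le> q0 (y*y)" by (intro great)
    qed
    obtain q1 where q1: "q1 \<in> C" using False by blast
    have "q0 \<in> F"
    proof -
      have "uniform_seminorm sm q0" unfolding uniform_seminorm_def seminorm_def
        using nn tri hom sq by blast
      moreover have "q0 y \<le> p y" for y using low[OF q1] qC[OF q1] order_trans by blast
      moreover have "q0 x = p x"
      proof -
        have "q0 x = (INF q\<in>C. p x)" unfolding q0_def using qC by (intro INF_cong) auto
        then show ?thesis using False by simp
      qed
      ultimately show ?thesis by (simp add: F_def fam_def)
    qed
    moreover have "\<forall>a\<in>C. P a q0" using low by (auto simp: P_def)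
    ultimately show ?thesis by blast
  qed
  from predicate_Zorn[OF po ch] obtain m where "m \<in> F" "\<forall>a\<in>F. P m a \<longrightarrow> a = m" by blast
  then show ?thesis by (auto simp: F_def P_def)
qed




lemma qa_const:
  assumes "\<And>n. f n = (R::real)" shows "f \<longlonglongrightarrow> R"
proof -
  have "f = (\<lambda>n. R)" using assms by auto
  then show ?thesis by simp
qed

lemma mult_seminorm_exists:
  assumes c: "calg sm" and u: "uniform_seminorm sm p" and px: "p x > 0"
  shows "\<exists>m. seminorm sm m \<and> (\<forall>y. m y \<le> p y) \<and> m x = p x \<and> (\<forall>a y. m (a * y) = m a * m y)"
proof -
  obtain m where mF: "m \<in> fam sm p x" and mmin: "\<forall>q\<in>fam sm p x. (\<forall>y. q y \<le> m y) \<longrightarrow> q = m"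
    using fam_min[OF c u] by blast
  have um: "uniform_seminorm sm m" and mp: "\<forall>y. m y \<le> p y" and mx: "m x = p x"
    using mF by (auto simp: fam_def)
  note sm' = us_sn[OF um]
  define R where "R = p x"
  have R: "R > 0" "m x = R" using px mx by (auto simp: R_def)
  have m1: "m 1 = 1"
  proof (rule ccontr)
    assume "m 1 \<noteq> 1"
    then have "m 1 = 0" using us_one[OF c um] by blast
    then have "m x \<le> 0" using us_submult[OF c um, of x 1] by simp
    then show False using R by simp
  qed
  have mpow: "m (w ^ n) = m w ^ n" for w n by (rule us_pow[OF c um m1])
  have xmul: "m (x * y) = R * m y" for y
  proof -
    have "qa m x \<in> fam sm p x"
    proof -
      have "uniform_seminorm sm (qa m x)" using qa_us(1)[OF c um] R by simp
      moreover have "\<forall>y. qa m x y \<le> p y" using qa_us(2)[OF c um] R mp order_trans by fastforce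
      moreover have "qa m x x = p x"
      proof -
        have "(\<lambda>n. m (x ^ n * x) / m x ^ n) \<longlonglongrightarrow> R"
        proof (rule qa_const)
          fix n
          have "m (x ^ n * x) = R ^ Suc n" using mpow[of x "Suc n"] R by (simp add: mult.commute)
          then show "m (x ^ n * x) / m x ^ n = R" using R by simp
        qed
        moreover have "(\<lambda>n. m (x ^ n * x) / m x ^ n) \<longlonglongrightarrow> qa m x x"
          using qa_basic(1)[OF c um, where a=x and y=x] R by simp
        ultimately show ?thesis using LIMSEQ_unique R by (simp add: R_def)
      qed
      ultimately show ?thesis by (simp add: fam_def)
    qed
    then have eq: "qa m x = m" using mmin qa_us(2)[OF c um] R by simp
    have "m y \<le> m (x ^ 1 * y) / m x ^ 1" using qa_basic(2)[OF c um, of x y 1] R eq by simp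
    then have "R * m y \<le> m (x * y)" using R by (simp add: field_simps)
    moreover have "m (x * y) \<le> R * m y" using us_submult[OF c um, of x y] R by simp
    ultimately show ?thesis by simp
  qed
  have xpow: "m (x ^ n * y) = R ^ n * m y" for n y
  proof (induction n)
    case 0 then show ?case by simp
  next
    case (Suc n)
    have "m (x ^ Suc n * y) = m (x * (x ^ n * y))" by (simp add: mult.assoc)
    also have "\<dots> = R * m (x ^ n * y)" by (rule xmul)
    finally show ?case using Suc by simp
  qed
  have mult: "m (a * y) = m a * m y" for a y
  proof (cases "m a > 0")
    case False
    then have "m a = 0" using sn_nonneg[OF sm', of a] by simp
    then have "m (a * y) \<le> 0" using us_submult[OF c um, of a y] by simp
    then show ?thesis using sn_nonneg[OF sm', of "a*y"] \<open>m a = 0\<close> by simp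
  next
    case True
    have "qa m a \<in> fam sm p x"
    proof -
      have "uniform_seminorm sm (qa m a)" using qa_us(1)[OF c um] True by simp
      moreover have "\<forall>y. qa m a y \<le> p y" using qa_us(2)[OF c um] True mp order_trans by fastforce
      moreover have "qa m a x = p x"
      proof -
        have "(\<lambda>n. m (a ^ n * x) / m a ^ n) \<longlonglongrightarrow> R"
        proof (rule qa_const)
          fix n
          have "m (a ^ n * x) = R * m a ^ n" using xpow[of 1 "a ^ n"] mpow by (simp add: mult.commute)
          then show "m (a ^ n * x) / m a ^ n = R" using True by simp
        qed
        moreover have "(\<lambda>n. m (a ^ n * x) / m a ^ n) \<longlonglongrightarrow> qa m a x"
          using qa_basic(1)[OF c um True, where y=x] by simp
        ultimately show ?thesis using LIMSEQ_unique R by (simp add: R_def)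
      qed
      ultimately show ?thesis by (simp add: fam_def)
    qed
    then have eq: "qa m a = m" using mmin qa_us(2)[OF c um] True by simp
    have "m y \<le> m (a ^ 1 * y) / m a ^ 1" using qa_basic(2)[OF c um True, of y 1] eq by simp
    then have "m a * m y \<le> m (a * y)" using True by (simp add: field_simps)
    moreover have "m (a * y) \<le> m a * m y" using us_submult[OF c um] by simp
    ultimately show ?thesis by simp
  qed
  show ?thesis using sm' mp mx mult by blast
qed




definition ru :: "nat \<Rightarrow> nat \<Rightarrow> complex" where
  "ru n k = exp (2 * of_real pi * \<i> * of_nat k / of_nat n)"

lemma ru_pow: "n \<noteq> 0 \<Longrightarrow> (ru n k) ^ n = 1"
  unfolding ru_def by (rule complex_root_unity)

lemma ru_inj: "n \<ge> 1 \<Longrightarrow> inj_on (ru n) {..<n}"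
  unfolding ru_def inj_on_def using complex_root_unity_eq by auto

lemma ru_0: "ru n 0 = 1" by (simp add: ru_def)

lemma roots_prod:
  fixes \<mu> :: complex
  assumes n: "n \<ge> 1"
  shows "(\<Prod>k<n. [:- (\<mu> * ru n k), 1:]) = monom 1 n - [:\<mu> ^ n:]"
proof (rule ccontr)
  define P where "P = (\<Prod>k<n. [:- (\<mu> * ru n k), 1:])"
  define T where "T = monom (1::complex) n - [:\<mu> ^ n:]"
  define D where "D = T - P"
  assume "\<not> ?thesis"
  then have D0: "D \<noteq> 0" by (simp add: D_def P_def T_def)
  have degP: "degree P = n" unfolding P_def
    by (subst degree_prod_eq_sum_degree) auto
  have lcP: "lead_coeff P = 1" unfolding P_def by (simp add: lead_coeff_prod)
  have degT: "degree T = n"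
  proof -
    have "T = monom 1 n + [:-(\<mu>^n):]" by (simp add: T_def)
    also have "degree \<dots> = degree (monom (1::complex) n)"
      using n by (intro degree_add_eq_left) (simp add: degree_monom_eq)
    finally show ?thesis by (simp add: degree_monom_eq)
  qed
  have cT: "coeff T n = 1" using n by (cases n) (simp_all add: T_def)
  have cD: "coeff D n = 0" using cT lcP degP by (simp add: D_def)
  have "degree D \<le> n" unfolding D_def using degP degT by (intro degree_diff_le) auto
  moreover have "degree D \<noteq> n" using cD D0 by (metis leading_coeff_0_iff)
  ultimately have degD: "degree D < n" by simp
  show False
  proof (cases "\<mu> = 0")
    case True
    have "P = [:0, 1:] ^ n" unfolding P_def using True by simp
    moreover have "T = [:0,1:] ^ n" unfolding T_def using True n by (simp add: monom_altdef)
    ultimately show False using D0 by (simp add: D_def)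
  next
    case False
    have roots: "poly D (\<mu> * ru n k) = 0" if "k < n" for k
    proof -
      have "poly P (\<mu> * ru n k) = 0" unfolding P_def poly_prod
        using that by (intro prod_zero) auto
      moreover have "poly T (\<mu> * ru n k) = 0" unfolding T_def
        using ru_pow[of n k] n by (simp add: poly_monom power_mult_distrib)
      ultimately show ?thesis by (simp add: D_def)
    qed
    have "(\<lambda>k. \<mu> * ru n k) ` {..<n} \<subseteq> {x. poly D x = 0}" using roots by auto
    moreover have "card ((\<lambda>k. \<mu> * ru n k) ` {..<n}) = n"
    proof -
      have "inj_on (\<lambda>k. \<mu> * ru n k) {..<n}" using ru_inj[OF n] False by (auto simp: inj_on_def)
      then show ?thesis by (simp add: card_image)
    qed
    ultimately have "n \<le> card {x. poly D x = 0}"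
      using poly_roots_finite[OF D0] by (metis card_mono)
    then show False using card_poly_roots_bound[OF D0] degD by simp
  qed
qed

section \<open>Evaluating complex polynomials in the algebra\<close>

definition Ev :: "(complex \<Rightarrow> 'a::comm_ring_1 \<Rightarrow> 'a) \<Rightarrow> 'a \<Rightarrow> complex poly \<Rightarrow> 'a" where
  "Ev sm z p = poly (map_poly (\<lambda>c. sm c 1) p) z"

lemma Ev_add:
  assumes c: "calg sm"
  shows "Ev sm z (p + q) = Ev sm z p + Ev sm z q"
proof -
  have "map_poly (\<lambda>c. sm c 1) (p + q) = map_poly (\<lambda>c. sm c 1) p + map_poly (\<lambda>c. sm c 1) q"
    by (rule poly_eqI) (simp add: coeff_map_poly calg_sm0[OF c] calg_add2[OF c])
  then show ?thesis by (simp add: Ev_def)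
qed

lemma Ev_smult:
  assumes c: "calg sm"
  shows "Ev sm z (smult a p) = sm a 1 * Ev sm z p"
proof -
  have "map_poly (\<lambda>c. sm c 1) (smult a p) = smult (sm a 1) (map_poly (\<lambda>c. sm c 1) p)"
    by (rule map_poly_smult) (simp_all add: calg_sm0[OF c] calg_e_mult[OF c])
  then show ?thesis by (simp add: Ev_def)
qed

lemma Ev_pCons:
  assumes c: "calg sm"
  shows "Ev sm z (pCons a p) = sm a 1 + z * Ev sm z p"
  by (simp add: Ev_def map_poly_pCons calg_sm0[OF c])

lemma Ev_const:
  assumes c: "calg sm"
  shows "Ev sm z [:a:] = sm a 1"
  using Ev_pCons[OF c, of z a 0] by (simp add: Ev_def)

lemma e_neg: "calg sm \<Longrightarrow> sm (- a) 1 = - sm a 1"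
  using calg_diff2[of sm 0 a 1] calg_sm0[of sm 1] by simp

lemma Ev_lin:
  assumes c: "calg sm"
  shows "Ev sm z ([:-a, 1:] * p) = (z - sm a 1) * Ev sm z p"
proof -
  have "[:-a, 1:] * p = smult (-a) p + pCons 0 p" by simp
  then have "Ev sm z ([:-a, 1:] * p) = sm (-a) 1 * Ev sm z p + (sm 0 1 + z * Ev sm z p)"
    by (simp only: Ev_add[OF c] Ev_smult[OF c] Ev_pCons[OF c])
  then show ?thesis using e_neg[OF c] calg_sm0[OF c] by (simp add: algebra_simps)
qed

lemma Ev_prod_lin:
  fixes n :: nat
  assumes c: "calg sm"
  shows "Ev sm z (\<Prod>k<n. [:- f k, 1:]) = (\<Prod>k<n. z - sm (f k) 1)"
proof (induction n)
  case 0
  then show ?case using Ev_const[OF c, of z 1] calg_one[OF c] by (simp add: one_pCons)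
next
  case (Suc n)
  have "Ev sm z (\<Prod>k<Suc n. [:- f k, 1:]) = Ev sm z ([:- f n, 1:] * (\<Prod>k<n. [:- f k, 1:]))"
    by (simp add: mult.commute)
  also have "\<dots> = (z - sm (f n) 1) * Ev sm z (\<Prod>k<n. [:- f k, 1:])" by (rule Ev_lin[OF c])
  finally show ?case using Suc by (simp add: mult.commute)
qed

lemma Ev_T:
  assumes c: "calg sm"
  shows "Ev sm z (monom 1 n - [:b:]) = z ^ n - sm b 1"
proof -
  have "monom 1 n - [:b:] = monom 1 n + [:-b:]" by simp
  then have "Ev sm z (monom 1 n - [:b:]) = Ev sm z (monom 1 n) + Ev sm z [:-b:]"
    using Ev_add[OF c] by metis
  moreover have "Ev sm z (monom 1 n) = z ^ n"
    using calg_one[OF c] calg_sm0[OF c] by (simp add: Ev_def map_poly_monom poly_monom)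
  ultimately show ?thesis using Ev_const[OF c] e_neg[OF c] by simp
qed

lemma alg_roots_prod:
  assumes c: "calg sm" and n: "n \<ge> 1"
  shows "(\<Prod>k<n. z - sm (\<mu> * ru n k) 1) = z ^ n - sm (\<mu> ^ n) 1"
  using Ev_prod_lin[OF c, of z "\<lambda>k. \<mu> * ru n k" n] Ev_T[OF c, of z n "\<mu>^n"] roots_prod[OF n, of \<mu>]
  by simp




locale msn =
  fixes sm :: "complex \<Rightarrow> 'a::comm_ring_1 \<Rightarrow> 'a" and m :: "'a \<Rightarrow> real"
  assumes c: "calg sm" and s: "seminorm sm m" and m1: "m 1 = 1"
    and mm: "\<And>a y. m (a * y) = m a * m y"
begin

lemma me: "m (sm a 1) = cmod a" using sn_hom[OF s, of a 1] m1 by simp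

lemma mpow: "m (w ^ n) = m w ^ n"
  by (induction n) (simp_all add: m1 mm)

lemma mprod: "m (\<Prod>k<(n::nat). f k) = (\<Prod>k<n. m (f k))"
  by (induction n) (simp_all add: m1 mm)

lemma e0: "sm 0 1 = 0" by (rule calg_sm0[OF c])

lemma gm: "\<exists>l. m (y - sm l 1) = 0"
proof -
  define \<phi> where "\<phi> a = m (y - sm a 1)" for a
  have nn: "0 \<le> \<phi> a" for a using sn_nonneg[OF s] by (simp add: \<phi>_def)
  have lip: "\<bar>\<phi> a - \<phi> b\<bar> \<le> cmod (a - b)" for a b
  proof -
    have "(y - sm a 1) - (y - sm b 1) = sm (b - a) 1" using calg_diff2[OF c, of b a 1] by simp
    then have "\<bar>\<phi> a - \<phi> b\<bar> \<le> cmod (b - a)" unfolding \<phi>_def using sn_rev_tri[OF c s] me by metis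
    then show ?thesis by (simp add: norm_minus_commute)
  qed
  have cont: "continuous_on UNIV \<phi>"
    unfolding continuous_on_iff
  proof (intro ballI allI impI)
    fix x and \<epsilon> :: real assume "\<epsilon> > 0"
    show "\<exists>\<delta>>0. \<forall>x'\<in>UNIV. dist x' x < \<delta> \<longrightarrow> dist (\<phi> x') (\<phi> x) < \<epsilon>"
      using lip \<open>\<epsilon> > 0\<close> by (intro exI[of _ \<epsilon>]) (auto simp: dist_norm dist_real_def intro: le_less_trans)
  qed
  have grow: "cmod a - m y \<le> \<phi> a" for a
  proof -
    have "sm a 1 = y - (y - sm a 1)" by simp
    then have "m (sm a 1) \<le> m y + m (y - sm a 1)" using sn_diff[OF c s] by metis
    then show ?thesis using me by (simp add: \<phi>_def)
  qed
  have phi0: "\<phi> 0 = m y" by (simp add: \<phi>_def e0)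
  define r where "r = 2 * m y + 1"
  obtain l0 where l0: "l0 \<in> cball 0 r" "\<forall>b\<in>cball 0 r. \<phi> l0 \<le> \<phi> b"
    using continuous_attains_inf[OF compact_cball, of 0 r \<phi>] continuous_on_subset[OF cont]
      sn_nonneg[OF s, of y] by (force simp: r_def)
  have glob: "\<phi> l0 \<le> \<phi> b" for b
  proof (cases "b \<in> cball 0 r")
    case True then show ?thesis using l0 by blast
  next
    case False
    then have "cmod b > r" by (simp add: dist_norm)
    then have "\<phi> b > m y" using grow[of b] by (simp add: r_def)
    moreover have "0 \<in> cball (0::complex) r" using sn_nonneg[OF s, of y] by (simp add: r_def)
    then have "\<phi> l0 \<le> \<phi> 0" using l0 by blast
    ultimately show ?thesis using phi0 by linarith
  qed
  define M where "M = \<phi> l0"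
  have "M = 0"
  proof (rule ccontr)
    assume "M \<noteq> 0"
    then have Mp: "M > 0" using nn[of l0] by (simp add: M_def)
    have key: "\<phi> (l1 + \<mu>) = M" if h1: "\<phi> l1 = M" and h2: "cmod \<mu> < M" for l1 \<mu>
    proof (rule ccontr)
      assume "\<phi> (l1 + \<mu>) \<noteq> M"
      then have gt: "\<phi> (l1 + \<mu>) > M" using glob[of "l1+\<mu>"] by (simp add: M_def)
      define \<rho> where "\<rho> = cmod \<mu> / M"
      have \<rho>: "0 \<le> \<rho>" "\<rho> < 1" using h2 Mp by (auto simp: \<rho>_def)
      define \<delta> where "\<delta> = (\<phi> (l1 + \<mu>) - M) / M"
      have \<delta>: "\<delta> > 0" using gt Mp by (simp add: \<delta>_def)
      obtain n where n: "\<rho> ^ n < \<delta>" using real_arch_pow_inv[OF \<delta> \<rho>(2)] by blast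
      define N where "N = Suc n"
      have rN: "\<rho> ^ N < \<delta>"
      proof -
        have "\<rho> ^ N \<le> \<rho> ^ n" unfolding N_def using \<rho> by (simp add: mult_left_le_one_le)
        then show ?thesis using n by simp
      qed
      define z where "z = y - sm l1 1"
      have mz: "m z = M" using h1 by (simp add: z_def \<phi>_def)
      have idt: "(\<Prod>k<N. z - sm (\<mu> * ru N k) 1) = z ^ N - sm (\<mu> ^ N) 1"
        by (rule alg_roots_prod[OF c]) (simp add: N_def)
      have fac: "z - sm (\<mu> * ru N k) 1 = y - sm (l1 + \<mu> * ru N k) 1" for k
        using calg_add2[OF c, of l1 "\<mu> * ru N k" 1] by (simp add: z_def)
      have "m (\<Prod>k<N. z - sm (\<mu> * ru N k) 1) = (\<Prod>k<N. \<phi> (l1 + \<mu> * ru N k))"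
        by (simp add: mprod fac \<phi>_def)
      also have "\<dots> = \<phi> (l1 + \<mu>) * (\<Prod>k<n. \<phi> (l1 + \<mu> * ru N (Suc k)))"
        unfolding N_def by (subst prod.lessThan_Suc_shift) (simp add: ru_0)
      also have "\<dots> \<ge> \<phi> (l1 + \<mu>) * M ^ n"
      proof -
        have "(\<Prod>k<n. M) \<le> (\<Prod>k<n. \<phi> (l1 + \<mu> * ru N (Suc k)))"
          using Mp glob by (intro prod_mono) (auto simp: M_def less_imp_le)
        then show ?thesis using nn by (intro mult_left_mono) auto
      qed
      finally have lo: "\<phi> (l1 + \<mu>) * M ^ n \<le> m (z ^ N - sm (\<mu> ^ N) 1)" using idt by simp
      have hi: "m (z ^ N - sm (\<mu> ^ N) 1) \<le> M ^ N + cmod \<mu> ^ N"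
        using sn_diff[OF c s, of "z ^ N" "sm (\<mu> ^ N) 1"] me mpow mz by (simp add: norm_power)
      have "cmod \<mu> ^ N = (\<rho> * M) ^ N" using Mp by (simp add: \<rho>_def)
      then have "cmod \<mu> ^ N = M ^ n * (M * \<rho> ^ N)" by (simp add: N_def power_mult_distrib)
      then have "\<phi> (l1 + \<mu>) * M ^ n \<le> M ^ n * (M + M * \<rho> ^ N)" using lo hi
        by (simp add: N_def algebra_simps)
      then have "\<phi> (l1 + \<mu>) \<le> M + M * \<rho> ^ N" using Mp by (simp add: mult.commute)
      also have "\<dots> < M + M * \<delta>" using rN Mp by simp
      also have "\<dots> = \<phi> (l1 + \<mu>)" using Mp by (simp add: \<delta>_def)
      finally show False by simp
    qed
    have iter: "\<phi> (l0 + of_nat k * complex_of_real (M/2)) = M" for k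
    proof (induction k)
      case 0 then show ?case by (simp add: M_def)
    next
      case (Suc k)
      have eqk: "l0 + of_nat (Suc k) * complex_of_real (M/2) = (l0 + of_nat k * complex_of_real (M/2)) + complex_of_real (M/2)"
        by (simp only: of_nat_Suc distrib_right mult_1 ac_simps)
      have "\<phi> ((l0 + of_nat k * complex_of_real (M/2)) + complex_of_real (M/2)) = M"
        using Mp by (intro key[OF Suc]) simp
      then show ?case by (simp only: eqk)
    qed
    obtain k where k: "cmod l0 + m y + M < of_nat k * (M/2)"
      using ex_less_of_nat_mult[of "M/2" "cmod l0 + m y + M"] Mp by auto
    define b where "b = l0 + of_nat k * complex_of_real (M/2)"
    have "cmod (of_nat k * complex_of_real (M/2)) = of_nat k * (M/2)" using Mp by (simp add: norm_mult)
    then have "cmod b \<ge> of_nat k * (M/2) - cmod l0" unfolding b_def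
      by (metis norm_diff_ineq add_diff_cancel_left' diff_le_eq norm_triangle_ineq4 add.commute)
    then have "\<phi> b > M" using grow[of b] k by simp
    then show False using iter[of k] by (simp add: b_def)
  qed
  then show ?thesis unfolding M_def \<phi>_def by blast
qed

definition gch :: "'a \<Rightarrow> complex" where "gch y = (SOME l. m (y - sm l 1) = 0)"

lemma gch_spec: "m (y - sm (gch y) 1) = 0"
  unfolding gch_def using gm by (rule someI_ex)

lemma uniq: "m (y - sm a 1) = 0 \<Longrightarrow> m (y - sm b 1) = 0 \<Longrightarrow> a = b"
proof -
  assume ha: "m (y - sm a 1) = 0" and hb: "m (y - sm b 1) = 0"
  have "sm (a - b) 1 = (y - sm b 1) - (y - sm a 1)" using calg_diff2[OF c] by simp
  then have "cmod (a - b) \<le> m (y - sm b 1) + m (y - sm a 1)" using sn_diff[OF c s] me by metis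
  then show "a = b" using ha hb by simp
qed

lemma gch_eq: "m (y - sm a 1) = 0 \<Longrightarrow> gch y = a"
  using uniq gch_spec by blast

lemma gch_char: "gch \<in> Mstar sm"
proof -
  have add: "gch (x + y) = gch x + gch y" for x y
  proof (rule gch_eq)
    have "(x + y) - sm (gch x + gch y) 1 = (x - sm (gch x) 1) + (y - sm (gch y) 1)"
      using calg_add2[OF c] by simp
    then have "m ((x + y) - sm (gch x + gch y) 1) = m ((x - sm (gch x) 1) + (y - sm (gch y) 1))"
      by (rule arg_cong)
    then have "m ((x + y) - sm (gch x + gch y) 1) \<le> 0"
      using sn_tri[OF s, of "x - sm (gch x) 1" "y - sm (gch y) 1"] gch_spec by simp
    then show "m ((x + y) - sm (gch x + gch y) 1) = 0" using sn_nonneg[OF s] by (simp add: antisym)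
  qed
  have hom: "gch (sm a x) = a * gch x" for a x
  proof (rule gch_eq)
    have "sm a x - sm (a * gch x) 1 = sm a (x - sm (gch x) 1)"
      using calg_diff[OF c] calg_assoc[OF c] by simp
    then show "m (sm a x - sm (a * gch x) 1) = 0" using sn_hom[OF s] gch_spec by simp
  qed
  have mul: "gch (x * y) = gch x * gch y" for x y
  proof (rule gch_eq)
    have "x * y - sm (gch x * gch y) 1 = (x - sm (gch x) 1) * y + sm (gch x) 1 * (y - sm (gch y) 1)"
      using calg_e_mult[OF c] by (simp add: algebra_simps)
    then have "m (x * y - sm (gch x * gch y) 1) \<le> 0"
      using sn_tri[OF s, of "(x - sm (gch x) 1) * y" "sm (gch x) 1 * (y - sm (gch y) 1)"]
        gch_spec mm by simp
    then show "m (x * y - sm (gch x * gch y) 1) = 0" using sn_nonneg[OF s] by (simp add: antisym)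
  qed
  have "gch 1 = 1" by (rule gch_eq) (simp add: calg_one[OF c] sn_zero[OF c s])
  then show ?thesis using add hom mul unfolding Mstar_def by (auto intro: exI[of _ 1])
qed

lemma gch_norm: "cmod (gch y) = m y"
proof -
  have "\<bar>m y - m (sm (gch y) 1)\<bar> \<le> m (y - sm (gch y) 1)" by (rule sn_rev_tri[OF c s])
  then show ?thesis using gch_spec me by simp
qed

end

lemma gelfand:
  assumes c: "calg sm" and u: "uniform_seminorm sm p" and px: "p x > 0"
  shows "\<exists>g\<in>Mstar sm. (\<forall>y. cmod (g y) \<le> p y) \<and> cmod (g x) = p x"
proof -
  obtain m where s: "seminorm sm m" and mp: "\<forall>y. m y \<le> p y" and mx: "m x = p x"
    and mm: "\<forall>a y. m (a * y) = m a * m y"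
    using mult_seminorm_exists[OF c u px] by blast
  have "m 1 = 1" using mm[rule_format, of x 1] mx px by simp
  then interpret msn sm m using c s mm by unfold_locales auto
  show ?thesis using gch_char gch_norm mp mx by (intro bexI[of _ gch]) auto
qed




definition QF :: "('a \<Rightarrow> real) set \<Rightarrow> 'a \<Rightarrow> real" where "QF F y = (\<Sum>p\<in>F. p y)"

lemma QF_sn:
  assumes "finite F" "\<forall>p\<in>F. seminorm sm p"
  shows "seminorm sm (QF F)"
  unfolding seminorm_def QF_def
proof (intro conjI allI)
  fix x y c
  show "0 \<le> (\<Sum>p\<in>F. p x)" using assms sn_nonneg by (intro sum_nonneg) blast
  show "(\<Sum>p\<in>F. p (x + y)) \<le> (\<Sum>p\<in>F. p x) + (\<Sum>p\<in>F. p y)"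
    using assms sn_tri by (simp add: sum.distrib[symmetric]) (intro sum_mono, blast)
  have "\<forall>p\<in>F. p (sm c x) = cmod c * p x" using assms sn_hom by blast
  then show "(\<Sum>p\<in>F. p (sm c x)) = cmod c * (\<Sum>p\<in>F. p x)"
    by (simp add: sum_distrib_left)
qed

lemma QF_ge:
  assumes "finite F" "\<forall>p\<in>F. seminorm sm p" "p \<in> F"
  shows "p y \<le> QF F y"
  unfolding QF_def using assms sn_nonneg by (intro member_le_sum) auto

lemma ball_open:
  assumes c: "calg sm" and det: "determined_by T P" and sn: "\<forall>p\<in>P. seminorm sm p"
    and F: "finite F" "F \<subseteq> P"
  shows "openin T {y. QF F (y - x) < \<delta>}"
proof -
  have snF: "\<forall>p\<in>F. seminorm sm p" using sn F by blast
  note Q = QF_sn[OF F(1) snF]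
  show ?thesis unfolding det[unfolded determined_by_def, rule_format]
  proof (intro ballI)
    fix y0 assume "y0 \<in> {y. QF F (y - x) < \<delta>}"
    then have y0: "QF F (y0 - x) < \<delta>" by simp
    define s where "s = \<delta> - QF F (y0 - x)"
    have s: "s > 0" using y0 by (simp add: s_def)
    define e where "e = s / (real (card F) + 1)"
    have e: "e > 0" using s by (simp add: e_def)
    have ce: "real (card F) * e < s" using s
      by (simp add: e_def field_simps)
    have "{y. \<forall>p\<in>F. p (y - y0) < e} \<subseteq> {y. QF F (y - x) < \<delta>}"
    proof
      fix y assume "y \<in> {y. \<forall>p\<in>F. p (y - y0) < e}"
      then have yy: "\<forall>p\<in>F. p (y - y0) < e" by simp
      have "QF F (y - y0) \<le> (\<Sum>p\<in>F. e)" unfolding QF_def using yy by (intro sum_mono) (simp add: less_imp_le)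
      then have "QF F (y - y0) < s" using ce by simp
      moreover have "QF F (y - x) \<le> QF F (y - y0) + QF F (y0 - x)" by (rule sn_tri3[OF c Q])
      ultimately show "y \<in> {y. QF F (y - x) < \<delta>}" by (simp add: s_def)
    qed
    then show "\<exists>F' e. finite F' \<and> F' \<subseteq> P \<and> e > 0 \<and> {y. \<forall>p\<in>F'. p (y - y0) < e} \<subseteq> {y. QF F (y - x) < \<delta>}"
      using F e by (intro exI[of _ F] exI[of _ e]) simp
  qed
qed

lemma nbhd:
  assumes det: "determined_by T P" and sn: "\<forall>p\<in>P. seminorm sm p"
    and U: "openin T U" "x \<in> U"
  shows "\<exists>F e. finite F \<and> F \<subseteq> P \<and> e > 0 \<and> {y. QF F (y - x) < e} \<subseteq> U"
proof -
  have "\<forall>x\<in>U. \<exists>F e. finite F \<and> F \<subseteq> P \<and> e > 0 \<and> {y. \<forall>p\<in>F. p (y - x) < e} \<subseteq> U"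
    using det[unfolded determined_by_def, rule_format, of U] U(1) by (rule iffD1)
  from bspec[OF this U(2)] obtain F e where Fe: "finite F" "F \<subseteq> P" "e > 0" "{y. \<forall>p\<in>F. p (y - x) < e} \<subseteq> U"
    by (elim exE conjE)
  have "{y. QF F (y - x) < e} \<subseteq> {y. \<forall>p\<in>F. p (y - x) < e}"
  proof (intro subsetI CollectI ballI)
    fix y p assume y: "y \<in> {y. QF F (y - x) < e}" and p: "p \<in> F"
    have snF: "\<forall>p\<in>F. seminorm sm p" using sn Fe(2) by (auto simp: subset_iff)
    have "p (y - x) \<le> QF F (y - x)" by (rule QF_ge[OF Fe(1) snF p])
    then show "p (y - x) < e" using y by simp
  qed
  then have "{y. QF F (y - x) < e} \<subseteq> U" using Fe(4) by (rule order_trans)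
  then show ?thesis using Fe(1,2,3) by (intro exI[of _ F] exI[of _ e] conjI)
qed

lemma scale_bound:
  assumes c: "calg sm" and Q: "seminorm sm Q" and d: "\<delta> > 0"
    and Ssm: "\<And>a y. y \<in> S \<Longrightarrow> sm a y \<in> S"
    and hsm: "\<And>a y. y \<in> S \<Longrightarrow> h (sm a y) = a * h y"
    and hne: "\<And>y. y \<in> S \<Longrightarrow> Q y < \<delta> \<Longrightarrow> h y \<noteq> 1"
    and y: "y \<in> S"
  shows "cmod (h y) \<le> Q y / \<delta>"
proof (rule ccontr)
  assume "\<not> ?thesis"
  then have gt: "cmod (h y) > Q y / \<delta>" by simp
  then have hy: "h y \<noteq> 0" using sn_nonneg[OF Q, of y] d by (auto simp: field_simps)
  define u where "u = sm (1 / h y) y"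
  have uS: "u \<in> S" using Ssm[OF y] by (simp add: u_def)
  have "Q u = Q y / cmod (h y)" using sn_hom[OF Q] by (simp add: u_def norm_divide)
  also have "\<dots> < \<delta>" using gt hy d by (simp add: field_simps)
  finally have "h u \<noteq> 1" using hne uS by blast
  moreover have "h u = 1" using hsm[OF y] hy by (simp add: u_def)
  ultimately show False by simp
qed

lemma dense_zero:
  fixes g :: "'a \<Rightarrow> complex"
  assumes g: "continuous_map (subtopology X (X closure_of S)) euclidean g"
    and S: "S \<subseteq> topspace X" and z: "\<forall>x\<in>S. g x = 0"
  shows "\<forall>x \<in> X closure_of S. g x = 0"
proof (rule ccontr)
  assume "\<not> ?thesis"
  then obtain c where cC: "c \<in> X closure_of S" and gc: "g c \<noteq> 0" by blast
  have "openin (subtopology X (X closure_of S)) {x \<in> topspace (subtopology X (X closure_of S)). g x \<in> - {0}}"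
    by (rule openin_continuous_map_preimage[OF g]) (simp add: open_Compl)
  then obtain U where U: "openin X U"
    and eq: "{x \<in> topspace (subtopology X (X closure_of S)). g x \<in> - {0}} = U \<inter> (X closure_of S)"
    unfolding openin_subtopology by blast
  have "c \<in> U" using eq cC gc closure_of_subset_topspace[of X S] by auto
  then obtain y where y: "y \<in> S" "y \<in> U" using cC U unfolding in_closure_of by blast
  then have "y \<in> X closure_of S" using closure_of_subset[OF S] by blast
  then have "g y \<noteq> 0" using eq y closure_of_subset_topspace[of X S] by auto
  then show False using z y by blast
qed

lemma cmap_mult:
  fixes f g :: "'a \<Rightarrow> complex"
  shows "continuous_map X euclidean f \<Longrightarrow> continuous_map X euclidean g \<Longrightarrow> continuous_map X euclidean (\<lambda>x. f x * g x)"
  by (simp add: continuous_map_atin tendsto_mult)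

lemma cmap_cmult:
  fixes f :: "'a \<Rightarrow> complex"
  shows "continuous_map X euclidean f \<Longrightarrow> continuous_map X euclidean (\<lambda>x. a * f x)"
  by (simp add: continuous_map_atin tendsto_mult)

lemma closure_binop:
  assumes g: "continuous_map (prod_topology X X) X g" and S: "S \<subseteq> topspace X"
    and cl: "\<And>x y. x \<in> S \<Longrightarrow> y \<in> S \<Longrightarrow> g (x, y) \<in> S"
    and x: "x \<in> X closure_of S" and y: "y \<in> X closure_of S"
  shows "g (x, y) \<in> X closure_of S"
proof -
  have "g ` ((prod_topology X X) closure_of (S \<times> S)) \<subseteq> X closure_of (g ` (S \<times> S))"
    by (rule continuous_map_image_closure_subset[OF g])
  also have "\<dots> \<subseteq> X closure_of S" using cl by (intro closure_of_mono) auto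
  finally show ?thesis using x y by (auto simp: closure_of_Times)
qed

lemma closure_unop:
  assumes g: "continuous_map X X g"
    and cl: "\<And>x. x \<in> S \<Longrightarrow> g x \<in> S"
    and x: "x \<in> X closure_of S"
  shows "g x \<in> X closure_of S"
proof -
  have "g ` (X closure_of S) \<subseteq> X closure_of (g ` S)"
    by (rule continuous_map_image_closure_subset[OF g])
  also have "\<dots> \<subseteq> X closure_of S" using cl by (intro closure_of_mono) auto
  finally show ?thesis using x by auto
qed

lemma top_alg_sm_cont:
  assumes "top_alg sm T" shows "continuous_map T T (sm a)"
proof -
  have "continuous_map T (prod_topology euclidean T) (\<lambda>x. (a, x))"
    by (intro continuous_map_pairedI) (auto simp: continuous_map_id[unfolded id_def])
  moreover have "continuous_map (prod_topology euclidean T) T (\<lambda>(c, x). sm c x)"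
    using assms by (simp add: top_alg_def)
  ultimately have "continuous_map T T ((\<lambda>(c, x). sm c x) \<circ> (\<lambda>x. (a, x)))"
    by (rule continuous_map_compose)
  then show ?thesis by (simp add: o_def)
qed




lemma inv_suc_mono: "M \<le> m \<Longrightarrow> inverse (real (Suc m)) \<le> inverse (real (Suc M))"
  by (rule le_imp_inverse_le) auto

lemma extend:
  fixes smB :: "complex \<Rightarrow> 'b::comm_ring_1 \<Rightarrow> 'b" and h :: "'b \<Rightarrow> complex"
  assumes cB: "calg smB" and topB: "top_alg smB TB" and snB: "\<forall>p\<in>PB. seminorm smB p"
    and detB: "determined_by TB PB"
    and multB: "continuous_map (prod_topology TB TB) TB (\<lambda>(x, y). x * y)"
    and Sadd: "\<And>x y. x \<in> S \<Longrightarrow> y \<in> S \<Longrightarrow> x + y \<in> S"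
    and Smul: "\<And>x y. x \<in> S \<Longrightarrow> y \<in> S \<Longrightarrow> x * y \<in> S"
    and Ssm: "\<And>a x. x \<in> S \<Longrightarrow> smB a x \<in> S"
    and S1: "1 \<in> S"
    and hadd: "\<And>x y. x \<in> S \<Longrightarrow> y \<in> S \<Longrightarrow> h (x + y) = h x + h y"
    and hsm: "\<And>a x. x \<in> S \<Longrightarrow> h (smB a x) = a * h x"
    and hmul: "\<And>x y. x \<in> S \<Longrightarrow> y \<in> S \<Longrightarrow> h (x * y) = h x * h y"
    and h1: "h 1 = 1"
    and F: "finite F" "F \<subseteq> PB" and K: "K > 0"
    and bd: "\<And>b. b \<in> S \<Longrightarrow> cmod (h b) \<le> K * QF F b"
  shows "\<exists>f\<in>M_sub smB TB (TB closure_of S). \<forall>b\<in>S. f b = h b"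
proof -
  define C where "C = TB closure_of S"
  define Q where "Q = QF F"
  have snF: "\<forall>p\<in>F. seminorm smB p" using snB F by (auto simp: subset_iff)
  have Qsn: "seminorm smB Q" unfolding Q_def by (rule QF_sn[OF F(1) snF])
  have topsp: "topspace TB = UNIV" using topB by (simp add: top_alg_def)
  have SC: "S \<subseteq> C" unfolding C_def by (rule closure_of_subset) (simp add: topsp)
  have Sdiff: "x - y \<in> S" if "x \<in> S" "y \<in> S" for x y
    using Sadd[OF that(1) Ssm[OF that(2), of "-1"]] calg_neg1[OF cB] by simp
  have hdiff: "h (x - y) = h x - h y" if "x \<in> S" "y \<in> S" for x y
    using hadd[OF that(1) Ssm[OF that(2), of "-1"]] hsm[OF that(2), of "-1"] calg_neg1[OF cB] by simp
  have lip: "cmod (h x - h y) \<le> K * Q (x - y)" if "x \<in> S" "y \<in> S" for x y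
    using bd[OF Sdiff[OF that]] hdiff[OF that] by (simp add: Q_def)
  have Qsym: "Q (a - b) = Q (b - a)" for a b by (rule sn_diff_sym[OF cB Qsn])
  have Qtri: "Q (a - d) \<le> Q (a - b) + Q (b - d)" for a b d by (rule sn_tri3[OF cB Qsn])
  have Q0: "Q 0 = 0" by (rule sn_zero[OF cB Qsn])
  have Qopen: "openin TB {y. Q (y - c) < \<delta>}" for c \<delta>
    unfolding Q_def by (rule ball_open[OF cB detB snB F])
  have approx: "\<exists>b. b \<in> S \<and> Q (b - c) < \<delta>" if "c \<in> C" "\<delta> > 0" for c \<delta>
  proof -
    have i1: "c \<in> {y. Q (y - c) < \<delta>} \<and> openin TB {y. Q (y - c) < \<delta>}" using Q0 that Qopen by simp
    have i2: "\<forall>T. c \<in> T \<and> openin TB T \<longrightarrow> (\<exists>y. y \<in> S \<and> y \<in> T)"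
      using that(1) unfolding C_def in_closure_of by (elim conjE)
    have "\<exists>y. y \<in> S \<and> y \<in> {y. Q (y - c) < \<delta>}" by (rule mp[OF spec[OF i2] i1])
    then show ?thesis by simp
  qed
  define bs where "bs c n = (SOME b. b \<in> S \<and> Q (b - c) < inverse (real (Suc n)))" for c n
  have bsS: "bs c n \<in> S \<and> Q (bs c n - c) < inverse (real (Suc n))" if "c \<in> C" for c n
    unfolding bs_def by (rule someI_ex) (rule approx[OF that], simp)
  have cauchy: "Cauchy (\<lambda>n. h (bs c n))" if c: "c \<in> C" for c
  proof (rule metric_CauchyI)
    fix e :: real assume e: "e > 0"
    obtain M where M: "inverse (real (Suc M)) < e / (2 * K)"
      using reals_Archimedean[of "e / (2*K)"] e K by auto
    show "\<exists>M. \<forall>m\<ge>M. \<forall>n\<ge>M. dist (h (bs c m)) (h (bs c n)) < e"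
    proof (intro exI allI impI)
      fix m n assume mn: "M \<le> m" "M \<le> n"
      have "dist (h (bs c m)) (h (bs c n)) \<le> K * Q (bs c m - bs c n)"
        using lip bsS[OF c] by (simp add: dist_norm)
      also have "\<dots> \<le> K * (Q (bs c m - c) + Q (bs c n - c))"
        using Qtri[of "bs c m" "bs c n" c] Qsym[of c "bs c n"] K by (intro mult_left_mono) auto
      also have "\<dots> \<le> K * (inverse (real (Suc M)) + inverse (real (Suc M)))"
      proof -
        have "Q (bs c m - c) \<le> inverse (real (Suc M))"
          using bsS[OF c, of m] inv_suc_mono[OF mn(1)] by linarith
        moreover have "Q (bs c n - c) \<le> inverse (real (Suc M))"
          using bsS[OF c, of n] inv_suc_mono[OF mn(2)] by linarith
        ultimately show ?thesis using K by (intro mult_left_mono) auto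
      qed
      also have "\<dots> < K * (e / (2*K) + e / (2*K))" using M K by (intro mult_strict_left_mono) auto
      also have "\<dots> = e" using K by (simp add: field_simps)
      finally show "dist (h (bs c m)) (h (bs c n)) < e" .
    qed
  qed
  define f where "f c = lim (\<lambda>n. h (bs c n))" for c
  have flim: "(\<lambda>n. h (bs c n)) \<longlonglongrightarrow> f c" if "c \<in> C" for c
    using cauchy[OF that] unfolding f_def Cauchy_convergent_iff convergent_LIMSEQ_iff .
  have flip: "cmod (f c - f c') \<le> K * Q (c - c')" if c: "c \<in> C" and c': "c' \<in> C" for c c'
  proof -
    have L1: "(\<lambda>n. cmod (h (bs c n) - h (bs c' n))) \<longlonglongrightarrow> cmod (f c - f c')"
      by (intro tendsto_norm tendsto_diff flim c c')
    have L2: "(\<lambda>n. K * (Q (c - c') + 2 * inverse (real (Suc n)))) \<longlonglongrightarrow> K * (Q (c - c') + 2 * 0)"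
      by (intro tendsto_intros LIMSEQ_inverse_real_of_nat)
    have le: "cmod (h (bs c n) - h (bs c' n)) \<le> K * (Q (c - c') + 2 * inverse (real (Suc n)))" for n
    proof -
      have "cmod (h (bs c n) - h (bs c' n)) \<le> K * Q (bs c n - bs c' n)"
        using lip bsS[OF c] bsS[OF c'] by simp
      also have "\<dots> \<le> K * (Q (bs c n - c) + Q (c - c') + Q (bs c' n - c'))"
        using Qtri[of "bs c n" "bs c' n" c] Qtri[of c "bs c' n" c'] Qsym[of c' "bs c' n"] K
        by (intro mult_left_mono) auto
      also have "\<dots> \<le> K * (Q (c - c') + 2 * inverse (real (Suc n)))"
        using bsS[OF c, of n] bsS[OF c', of n] K by (intro mult_left_mono) auto
      finally show ?thesis .
    qed
    show ?thesis using LIMSEQ_le[OF L1 L2] le by simp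
  qed
  have fS: "f b = h b" if b: "b \<in> S" for b
  proof -
    have bC: "b \<in> C" using SC b by blast
    have "(\<lambda>n. h (bs b n) - h b) \<longlonglongrightarrow> 0"
    proof (rule Lim_null_comparison)
      show "\<forall>\<^sub>F n in sequentially. cmod (h (bs b n) - h b) \<le> K * inverse (real (Suc n))"
      proof (intro always_eventually allI)
        fix n
        have "cmod (h (bs b n) - h b) \<le> K * Q (bs b n - b)" using lip bsS[OF bC] b by simp
        also have "\<dots> \<le> K * inverse (real (Suc n))" using bsS[OF bC, of n] K by (intro mult_left_mono) auto
        finally show "cmod (h (bs b n) - h b) \<le> K * inverse (real (Suc n))" .
      qed
      show "(\<lambda>n. K * inverse (real (Suc n))) \<longlonglongrightarrow> 0"
        using tendsto_mult_left[OF LIMSEQ_inverse_real_of_nat, of K] by simp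
    qed
    then have "(\<lambda>n. h (bs b n)) \<longlonglongrightarrow> h b" by (rule LIM_zero_cancel)
    then show ?thesis using flim[OF bC] LIMSEQ_unique by blast
  qed
  have cont: "continuous_map (subtopology TB C) euclidean f"
    unfolding continuous_map_def
  proof (intro conjI allI impI)
    show "f \<in> topspace (subtopology TB C) \<rightarrow> topspace euclidean" unfolding topspace_euclidean by (rule Pi_I) (rule UNIV_I)
    fix U :: "complex set" assume "openin euclidean U"
    then have U: "open U" by (simp only: open_openin)
    show "openin (subtopology TB C) {x \<in> topspace (subtopology TB C). f x \<in> U}"
    proof (subst openin_subopen, intro ballI)
      fix c assume "c \<in> {x \<in> topspace (subtopology TB C). f x \<in> U}"
      then have cC: "c \<in> C" and fc: "f c \<in> U" by (auto simp: topsp)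
      obtain r where r: "r > 0" "ball (f c) r \<subseteq> U" using U fc open_contains_ball by blast
      define T where "T = C \<inter> {y. Q (y - c) < r / K}"
      have "openin (subtopology TB C) T" unfolding T_def by (rule openin_subtopology_Int2[OF Qopen])
      moreover have "c \<in> T" using cC Q0 r K by (simp add: T_def)
      moreover have "T \<subseteq> {x \<in> topspace (subtopology TB C). f x \<in> U}"
      proof
        fix y assume "y \<in> T"
        then have yC: "y \<in> C" and yq: "Q (y - c) < r / K" by (auto simp: T_def)
        have "dist (f c) (f y) \<le> K * Q (c - y)" using flip[OF cC yC] by (simp add: dist_norm)
        also have "\<dots> < r" using yq Qsym[of c y] K by (simp add: field_simps)
        finally have "f y \<in> U" using r by auto
        then show "y \<in> {x \<in> topspace (subtopology TB C). f x \<in> U}" using yC by (simp add: topsp)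
      qed
      ultimately show "\<exists>T. openin (subtopology TB C) T \<and> c \<in> T \<and> T \<subseteq> {x \<in> topspace (subtopology TB C). f x \<in> U}"
        by blast
    qed
  qed
  have addB: "continuous_map (prod_topology TB TB) TB (\<lambda>(x, y). x + y)"
    using topB by (simp add: top_alg_def)
  have Cadd: "x + y \<in> C" if "x \<in> C" "y \<in> C" for x y
    using closure_binop[OF addB _ _ that[unfolded C_def]] Sadd by (simp add: topsp C_def)
  have Cmul: "x * y \<in> C" if "x \<in> C" "y \<in> C" for x y
    using closure_binop[OF multB _ _ that[unfolded C_def]] Smul by (simp add: topsp C_def)
  have Csm: "smB a x \<in> C" if "x \<in> C" for a x
    using closure_unop[OF top_alg_sm_cont[OF topB] _ that[unfolded C_def]] Ssm by (simp add: C_def)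
  define PC where "PC = prod_topology (subtopology TB C) (subtopology TB C)"
  have PCeq: "subtopology (prod_topology TB TB) ((prod_topology TB TB) closure_of (S \<times> S)) = PC"
    by (simp add: PC_def closure_of_Times subtopology_Times C_def)
  have PCclos: "(prod_topology TB TB) closure_of (S \<times> S) = C \<times> C"
    by (simp add: closure_of_Times C_def)
  have SS: "S \<times> S \<subseteq> topspace (prod_topology TB TB)" by (simp add: topsp)
  have fst_c: "continuous_map PC euclidean (\<lambda>z. f (fst z))"
    using continuous_map_compose[OF continuous_map_fst cont] unfolding PC_def by (simp add: o_def)
  have snd_c: "continuous_map PC euclidean (\<lambda>z. f (snd z))"
    using continuous_map_compose[OF continuous_map_snd cont] unfolding PC_def by (simp add: o_def)
  have binop_c: "continuous_map PC euclidean (\<lambda>z. f (g z))"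
    if g: "continuous_map (prod_topology TB TB) TB g" and gC: "\<And>x y. x \<in> C \<Longrightarrow> y \<in> C \<Longrightarrow> g (x, y) \<in> C"
    for g
  proof -
    have "continuous_map PC TB g"
      using continuous_map_from_subtopology[OF g, of "C \<times> C"] by (simp add: PC_def subtopology_Times)
    then have "continuous_map PC (subtopology TB C) g"
      by (rule continuous_map_into_subtopology) (auto simp: PC_def topsp gC)
    from continuous_map_compose[OF this cont] show ?thesis by (simp add: o_def)
  qed
  have fadd: "\<forall>z\<in>C \<times> C. f (fst z + snd z) - (f (fst z) + f (snd z)) = 0"
  proof -
    have "continuous_map PC euclidean (\<lambda>z. f ((\<lambda>(x, y). x + y) z))"
      by (rule binop_c[OF addB]) (simp add: Cadd)
    then have "continuous_map PC euclidean (\<lambda>z. f (fst z + snd z))" by (simp add: case_prod_unfold)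
    then have "continuous_map PC euclidean (\<lambda>z. f (fst z + snd z) - (f (fst z) + f (snd z)))"
      by (intro continuous_map_diff continuous_map_add fst_c snd_c)
    then have "\<forall>z \<in> (prod_topology TB TB) closure_of (S \<times> S). f (fst z + snd z) - (f (fst z) + f (snd z)) = 0"
      by (intro dense_zero[OF _ SS]) (auto simp: PCeq fS Sadd hadd)
    then show ?thesis by (simp add: PCclos)
  qed
  have fmul: "\<forall>z\<in>C \<times> C. f (fst z * snd z) - f (fst z) * f (snd z) = 0"
  proof -
    have "continuous_map PC euclidean (\<lambda>z. f ((\<lambda>(x, y). x * y) z))"
      by (rule binop_c[OF multB]) (simp add: Cmul)
    then have "continuous_map PC euclidean (\<lambda>z. f (fst z * snd z))" by (simp add: case_prod_unfold)
    then have "continuous_map PC euclidean (\<lambda>z. f (fst z * snd z) - f (fst z) * f (snd z))"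
      by (intro continuous_map_diff cmap_mult fst_c snd_c)
    then have "\<forall>z \<in> (prod_topology TB TB) closure_of (S \<times> S). f (fst z * snd z) - f (fst z) * f (snd z) = 0"
      by (intro dense_zero[OF _ SS]) (auto simp: PCeq fS Smul hmul)
    then show ?thesis by (simp add: PCclos)
  qed
  have fsm: "\<forall>x\<in>C. f (smB a x) - a * f x = 0" for a
  proof -
    have "continuous_map (subtopology TB C) TB (smB a)"
      by (rule continuous_map_from_subtopology[OF top_alg_sm_cont[OF topB]])
    then have "continuous_map (subtopology TB C) (subtopology TB C) (smB a)"
      by (rule continuous_map_into_subtopology) (auto simp: topsp Csm)
    from continuous_map_compose[OF this cont]
    have "continuous_map (subtopology TB C) euclidean (\<lambda>x. f (smB a x))" by (simp add: o_def)
    then have "continuous_map (subtopology TB C) euclidean (\<lambda>x. f (smB a x) - a * f x)"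
      by (intro continuous_map_diff cmap_cmult cont)
    then show ?thesis unfolding C_def
      by (intro dense_zero) (auto simp: topsp fS Ssm hsm)
  qed
  have "f \<in> M_sub smB TB C"
    unfolding M_sub_def
  proof (intro CollectI conjI ballI allI)
    show "f (x + y) = f x + f y" if "x \<in> C" "y \<in> C" for x y using fadd that by force
    show "f (smB a x) = a * f x" if "x \<in> C" for a x using fsm[of a] that by force
    show "f (x * y) = f x * f y" if "x \<in> C" "y \<in> C" for x y using fmul that by force
    show "\<exists>x\<in>C. f x \<noteq> 0" using SC S1 fS[OF S1] h1 by (intro bexI[of _ 1]) auto
    show "continuous_map (subtopology TB C) euclidean f" by (rule cont)
  qed
  then show ?thesis using fS unfolding C_def by blast
qed




lemma sep_point:
  assumes u: "uT_alg sm T" and x: "x \<noteq> 0"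
    and P: "\<forall>p\<in>P. uniform_seminorm sm p" and det: "determined_by T P"
  shows "\<exists>p\<in>P. p x > 0"
proof (rule ccontr)
  assume neg: "\<not> ?thesis"
  have z: "\<forall>p\<in>P. p x = 0"
  proof
    fix p assume p: "p \<in> P"
    have "0 \<le> p x" using sn_nonneg[OF us_sn] P p by blast
    moreover have "\<not> p x > 0" using neg p by blast
    ultimately show "p x = 0" by simp
  qed
  have ta: "top_alg sm T" using u by (simp add: uT_alg_def)
  then have H: "Hausdorff_space T" and tsp: "topspace T = UNIV" by (auto simp: top_alg_def)
  have "\<exists>U V. openin T U \<and> openin T V \<and> x \<in> U \<and> 0 \<in> V \<and> disjnt U V"
    using H[unfolded Hausdorff_space_def, rule_format, of x 0] x tsp by simp
  then obtain U V where UV: "openin T U" "openin T V" "x \<in> U" "0 \<in> V" "disjnt U V"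
    by (elim exE conjE)
  have snP: "\<forall>p\<in>P. seminorm sm p" using P us_sn by blast
  obtain F e where Fe: "finite F" "F \<subseteq> P" "e > 0" "{y. QF F (y - 0) < e} \<subseteq> V"
    using nbhd[OF det snP UV(2,4)] by blast
  have "QF F x = 0" unfolding QF_def using z Fe(2) by (intro sum.neutral) auto
  then have "x \<in> V" using Fe by auto
  then show False using UV by (auto simp: disjnt_def)
qed

lemma Mstar_one: "g \<in> Mstar sm \<Longrightarrow> g 1 = 1"
proof -
  assume g: "g \<in> Mstar sm"
  then obtain x where "g x \<noteq> 0" and "g (x * 1) = g x * g 1" unfolding Mstar_def by blast
  then show ?thesis by simp
qed

lemma Msub_one: "f \<in> M_sub sm T C \<Longrightarrow> 1 \<in> C \<Longrightarrow> f 1 = 1"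
proof -
  assume f: "f \<in> M_sub sm T C" and C1: "1 \<in> C"
  then obtain x where x: "x \<in> C" "f x \<noteq> 0" unfolding M_sub_def by blast
  then have "f (x * 1) = f x * f 1" using f C1 unfolding M_sub_def by blast
  then show ?thesis using x by simp
qed

locale mainctx =
  fixes smA :: "complex \<Rightarrow> 'a::comm_ring_1 \<Rightarrow> 'a" and TA :: "'a topology"
    and smB :: "complex \<Rightarrow> 'b::comm_ring_1 \<Rightarrow> 'b" and TB :: "'b topology"
    and \<Phi> :: "'a \<Rightarrow> 'b"
  assumes A: "uT_alg smA TA" "weakly_sigma_star_compact_regular smA"
    and B: "locally_convex_alg smB TB"
           "continuous_map (prod_topology TB TB) TB (\<lambda>(x, y). x * y)"
    and hom: "alg_hom smA smB \<Phi>" "inj \<Phi>"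
    and Q: "Q_sub TB (TB closure_of range \<Phi>)"
begin

abbreviation "S \<equiv> range \<Phi>"
abbreviation "C \<equiv> TB closure_of range \<Phi>"
abbreviation "MC \<equiv> M_sub smB TB C"

lemma taA: "top_alg smA TA" using A by (simp add: uT_alg_def)
lemma cA: "calg smA" using taA by (simp add: top_alg_def)
lemma topB: "top_alg smB TB" using B by (simp add: locally_convex_alg_def)
lemma cB: "calg smB" using topB by (simp add: top_alg_def)
lemma tspA: "topspace TA = UNIV" using taA by (simp add: top_alg_def)
lemma tspB: "topspace TB = UNIV" using topB by (simp add: top_alg_def)
lemma PA_ex: "\<exists>P. (\<forall>p\<in>P. uniform_seminorm smA p) \<and> determined_by TA P"
  using A by (simp add: uT_alg_def)
lemma PB_ex: "\<exists>P. (\<forall>p\<in>P. seminorm smB p) \<and> determined_by TB P"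
  using B by (simp add: locally_convex_alg_def)

lemma Phi_add: "\<Phi> (x + y) = \<Phi> x + \<Phi> y" using hom by (simp add: alg_hom_def)
lemma Phi_sm: "\<Phi> (smA c x) = smB c (\<Phi> x)" using hom by (simp add: alg_hom_def)
lemma Phi_mul: "\<Phi> (x * y) = \<Phi> x * \<Phi> y" using hom by (simp add: alg_hom_def)
lemma Phi_1: "\<Phi> 1 = 1" using hom by (simp add: alg_hom_def)
lemma Phi_0: "\<Phi> 0 = 0" using Phi_add[of 0 0] by simp
lemma Phi_diff: "\<Phi> (x - y) = \<Phi> x - \<Phi> y"
  using Phi_add[of "x - y" y] by (simp add: eq_diff_eq)
lemma inv_Phi: "inv \<Phi> (\<Phi> x) = x" using hom(2) by (simp add: inv_f_f)

lemma Sadd: "x \<in> S \<Longrightarrow> y \<in> S \<Longrightarrow> x + y \<in> S" by (auto simp flip: Phi_add)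
lemma Smul: "x \<in> S \<Longrightarrow> y \<in> S \<Longrightarrow> x * y \<in> S" by (auto simp flip: Phi_mul)
lemma Ssm: "x \<in> S \<Longrightarrow> smB a x \<in> S" by (auto simp flip: Phi_sm)
lemma S1: "1 \<in> S" using Phi_1 by (metis rangeI)

lemma SC: "S \<subseteq> C" by (rule closure_of_subset) (simp add: tspB)
lemma C1: "1 \<in> C" using SC S1 by blast

lemma addB: "continuous_map (prod_topology TB TB) TB (\<lambda>(x, y). x + y)"
  using topB by (simp add: top_alg_def)
lemma Cadd: "x \<in> C \<Longrightarrow> y \<in> C \<Longrightarrow> x + y \<in> C"
  using closure_binop[OF addB, of S x y] Sadd by (simp add: tspB)
lemma Cmul: "x \<in> C \<Longrightarrow> y \<in> C \<Longrightarrow> x * y \<in> C"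
  using closure_binop[OF B(2), of S x y] Smul by (simp add: tspB)
lemma Csm: "x \<in> C \<Longrightarrow> smB a x \<in> C"
  using closure_unop[OF top_alg_sm_cont[OF topB, of a], where S = "range \<Phi>" and x = x] Ssm by simp

lemma comp_Mstar: "f \<in> MC \<Longrightarrow> f \<circ> \<Phi> \<in> Mstar smA"
proof -
  assume f: "f \<in> MC"
  have PC: "\<Phi> x \<in> C" for x using SC by blast
  have f1: "f 1 = 1" by (rule Msub_one[OF f C1])
  show ?thesis unfolding Mstar_def
  proof (intro CollectI conjI allI)
    fix x y c
    show "(f \<circ> \<Phi>) (x + y) = (f \<circ> \<Phi>) x + (f \<circ> \<Phi>) y"
      using f PC by (simp add: Phi_add M_sub_def)
    show "(f \<circ> \<Phi>) (smA c x) = c * (f \<circ> \<Phi>) x"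
      using f PC by (simp add: Phi_sm M_sub_def)
    show "(f \<circ> \<Phi>) (x * y) = (f \<circ> \<Phi>) x * (f \<circ> \<Phi>) y"
      using f PC by (simp add: Phi_mul M_sub_def)
  next
    show "\<exists>x. (f \<circ> \<Phi>) x \<noteq> 0" using f1 Phi_1 by (intro exI[of _ 1]) simp
  qed
qed

lemma Msub_zero: "f \<in> MC \<Longrightarrow> f 0 = 0"
proof -
  assume f: "f \<in> MC"
  have "0 \<in> C" using SC Phi_0 by (metis rangeI subsetD)
  then have "f (0 + 0) = f 0 + f 0" using f unfolding M_sub_def by blast
  then show ?thesis by simp
qed

lemma Qbound: "\<exists>F e. finite F \<and> F \<subseteq> PB \<and> e > 0 \<and> (\<forall>f\<in>MC. \<forall>y\<in>C. cmod (f y) \<le> QF F y / e)"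
  if PB: "\<forall>p\<in>PB. seminorm smB p" "determined_by TB PB" for PB
proof -
  define Inv where "Inv = {x\<in>C. \<exists>y\<in>C. x * y = 1}"
  have "openin (subtopology TB C) Inv" using Q by (simp add: Q_sub_def Inv_def)
  then obtain U where U: "openin TB U" "Inv = U \<inter> C" unfolding openin_subtopology by blast
  have "1 \<in> Inv" using C1 by (auto simp: Inv_def)
  then have "1 \<in> U \<inter> C" by (simp only: U(2))
  then have "1 \<in> U" by (rule IntD1)
  from nbhd[OF PB(2) PB(1) U(1) this] obtain F e where Fe: "finite F" "F \<subseteq> PB" "e > 0" "{y. QF F (y - 1) < e} \<subseteq> U"
    by (elim exE conjE)
  have snF: "\<forall>p\<in>F. seminorm smB p" using PB(1) Fe(2) by (auto simp: subset_iff)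
  have Qs: "seminorm smB (QF F)" by (rule QF_sn[OF Fe(1) snF])
  have "cmod (f y) \<le> QF F y / e" if f: "f \<in> MC" and y: "y \<in> C" for f y
  proof (rule scale_bound[OF cB Qs Fe(3), where S = C and h = f])
    show "\<And>a y. y \<in> C \<Longrightarrow> smB a y \<in> C" by (rule Csm)
    show "\<And>a y. y \<in> C \<Longrightarrow> f (smB a y) = a * f y" using f unfolding M_sub_def by blast
    show "y \<in> C" by fact
    fix z assume z: "z \<in> C" and qz: "QF F z < e"
    show "f z \<noteq> 1"
    proof
      assume fz: "f z = 1"
      define u where "u = 1 + smB (-1) z"
      have uC: "u \<in> C" unfolding u_def by (intro Cadd C1 Csm z)
      have "u = 1 - z" using calg_neg1[OF cB] by (simp add: u_def)
      then have "QF F (u - 1) = QF F z" using sn_neg[OF cB Qs, of z] by simp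
      then have "u \<in> U" using Fe(4) qz by auto
      then have "u \<in> Inv" using U uC by blast
      then obtain w where w: "w \<in> C" "u * w = 1" by (auto simp: Inv_def)
      have fu: "f u = f 1 + (-1) * f z"
        using f C1 z Csm[OF z] unfolding u_def M_sub_def by auto
      then have "f u = 0" using Msub_one[OF f C1] fz by simp
      moreover have "f (u * w) = f u * f w" using f uC w unfolding M_sub_def by blast
      ultimately show False using w Msub_one[OF f C1] by simp
    qed
  qed
  then show ?thesis using Fe by blast
qed

end




context mainctx
begin

lemma d12:
  assumes cont: "continuous_map (subtopology TB S) TA (inv \<Phi>)"
  shows "S \<inter> strong_radical smB TB C = {0}"
proof (rule equalityI)
  obtain PA where PA: "\<forall>p\<in>PA. uniform_seminorm smA p" and detA: "determined_by TA PA"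
    using PA_ex by blast
  obtain PB where PB: "\<forall>p\<in>PB. seminorm smB p" and detB: "determined_by TB PB"
    using PB_ex by blast
  have snA: "\<forall>p\<in>PA. seminorm smA p" using PA us_sn by blast
  show "S \<inter> strong_radical smB TB C \<subseteq> {0}"
  proof
    fix b assume b: "b \<in> S \<inter> strong_radical smB TB C"
    then obtain x where bx: "b = \<Phi> x" by blast
    have SR: "\<forall>f\<in>MC. f b = 0" using b by (simp add: strong_radical_def)
    have "x = 0"
    proof (rule ccontr)
      assume x0: "x \<noteq> 0"
      obtain p where p: "p \<in> PA" "p x > 0" using sep_point[OF A(1) x0 PA detA] by blast
      have up: "uniform_seminorm smA p" using PA p(1) by blast
      obtain g where g: "g \<in> Mstar smA" and gb: "\<forall>y. cmod (g y) \<le> p y" and gx: "cmod (g x) = p x"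
        using gelfand[OF cA up p(2)] by blast
      have gadd: "g (u + v) = g u + g v" for u v using g by (simp add: Mstar_def)
      have gsm: "g (smA a u) = a * g u" for a u using g by (simp add: Mstar_def)
      have gmul: "g (u * v) = g u * g v" for u v using g by (simp add: Mstar_def)
      define h where "h = g \<circ> inv \<Phi>"
      have hP: "h (\<Phi> y) = g y" for y by (simp add: h_def inv_Phi)
      have pin: "{p} \<subseteq> PA" using p(1) by simp
      define Vp where "Vp = {y. QF {p} (y - 0) < 1}"
      have Vo: "openin TA Vp" unfolding Vp_def by (rule ball_open[OF cA detA snA _ pin]) simp
      have "openin (subtopology TB S) {b \<in> topspace (subtopology TB S). inv \<Phi> b \<in> Vp}"
        by (rule openin_continuous_map_preimage[OF cont Vo])
      then obtain U where U: "openin TB U" "{b \<in> topspace (subtopology TB S). inv \<Phi> b \<in> Vp} = U \<inter> S"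
        unfolding openin_subtopology by (elim exE conjE)
      have W: "{b \<in> topspace (subtopology TB S). inv \<Phi> b \<in> Vp} = {b \<in> S. p (inv \<Phi> b) < 1}"
        by (auto simp: tspB Vp_def QF_def)
      have "0 \<in> {b \<in> S. p (inv \<Phi> b) < 1}"
        using Phi_0 inv_Phi[of 0] sn_zero[OF cA us_sn[OF up]] by (metis (mono_tags, lifting) mem_Collect_eq rangeI zero_less_one)
      then have "0 \<in> U" using U(2) W by auto
      from nbhd[OF detB PB U(1) this] obtain F \<delta> where Fd: "finite F" "F \<subseteq> PB" "\<delta> > 0"
        "{y. QF F (y - 0) < \<delta>} \<subseteq> U" by (elim exE conjE)
      have snF: "\<forall>q\<in>F. seminorm smB q" using PB Fd(2) by (auto simp: subset_iff)
      have Qs: "seminorm smB (QF F)" by (rule QF_sn[OF Fd(1) snF])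
      have hsm: "h (smB a y) = a * h y" if "y \<in> S" for a y
        using that by (auto simp flip: Phi_sm simp: hP gsm)
      have hbd: "cmod (h y) \<le> QF F y / \<delta>" if yS: "y \<in> S" for y
      proof (rule scale_bound[OF cB Qs Fd(3), where S = S])
        show "\<And>a y. y \<in> S \<Longrightarrow> smB a y \<in> S" by (rule Ssm)
        show "\<And>a y. y \<in> S \<Longrightarrow> h (smB a y) = a * h y" by (rule hsm)
        show "y \<in> S" by fact
        fix z assume z: "z \<in> S" and qz: "QF F z < \<delta>"
        have "z \<in> U" using Fd(4) qz by auto
        then have "z \<in> {b \<in> S. p (inv \<Phi> b) < 1}" using z U(2) W by auto
        then have "p (inv \<Phi> z) < 1" by simp
        then have "cmod (h z) < 1" using gb by (simp add: h_def) (meson le_less_trans)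
        then show "h z \<noteq> 1" by auto
      qed
      have "\<exists>f\<in>M_sub smB TB (TB closure_of S). \<forall>b\<in>S. f b = h b"
      proof (rule extend[OF cB topB PB(1) detB B(2) _ _ _ S1 _ _ _ _ Fd(1,2)])
        show "\<And>x y. x \<in> S \<Longrightarrow> y \<in> S \<Longrightarrow> x + y \<in> S" by (rule Sadd)
        show "\<And>x y. x \<in> S \<Longrightarrow> y \<in> S \<Longrightarrow> x * y \<in> S" by (rule Smul)
        show "\<And>a x. x \<in> S \<Longrightarrow> smB a x \<in> S" by (rule Ssm)
        show "\<And>x y. x \<in> S \<Longrightarrow> y \<in> S \<Longrightarrow> h (x + y) = h x + h y"
          by (auto simp flip: Phi_add simp: hP gadd)
        show "\<And>a x. x \<in> S \<Longrightarrow> h (smB a x) = a * h x" by (rule hsm)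
        show "\<And>x y. x \<in> S \<Longrightarrow> y \<in> S \<Longrightarrow> h (x * y) = h x * h y"
          by (auto simp flip: Phi_mul simp: hP gmul)
        show "h 1 = 1" using hP[of 1] Phi_1 Mstar_one[OF g] by simp
        show "0 < 1 / \<delta>" using Fd(3) by simp
        show "\<And>b. b \<in> S \<Longrightarrow> cmod (h b) \<le> 1 / \<delta> * QF F b" using hbd by simp
      qed
      then obtain f where f: "f \<in> MC" "\<forall>b\<in>S. f b = h b" by blast
      have "f b = g x" using f(2) hP bx by simp
      moreover have "g x \<noteq> 0" using gx p(2) by auto
      moreover have "f b = 0" by (rule bspec[OF SR f(1)])
      ultimately show False by simp
    qed
    then show "b \<in> {0}" using bx Phi_0 by simp
  qed
  show "{0} \<subseteq> S \<inter> strong_radical smB TB C"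
  proof -
    have "0 \<in> S" using Phi_0 by (metis rangeI)
    moreover then have "0 \<in> C" using SC by blast
    ultimately show ?thesis using Msub_zero by (simp add: strong_radical_def)
  qed
qed

end




lemma closedin_eq0:
  fixes \<phi> :: "'x \<Rightarrow> complex"
  assumes "continuous_map X euclidean \<phi>"
  shows "closedin X {g \<in> topspace X. \<phi> g = 0}"
  using closedin_continuous_map_preimage[OF assms, of "{0}"] by simp

lemma closedin_le:
  fixes \<phi> :: "'x \<Rightarrow> real"
  assumes "continuous_map X euclidean \<phi>"
  shows "closedin X {g \<in> topspace X. \<phi> g \<le> r}"
  using closedin_continuous_map_preimage[OF assms, of "{..r}"] by simp

lemma closedin_all:
  assumes "\<And>i. closedin X {g \<in> topspace X. P i g}"
  shows "closedin X {g \<in> topspace X. \<forall>i. P i g}"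
proof -
  have "closedin X (\<Inter>i\<in>UNIV. {g \<in> topspace X. P i g})"
    using assms by (intro closedin_INT) auto
  moreover have "(\<Inter>i\<in>UNIV. {g \<in> topspace X. P i g}) = {g \<in> topspace X. \<forall>i. P i g}" by auto
  ultimately show ?thesis by simp
qed

lemma proj_cont: "continuous_map (product_topology (\<lambda>_. euclidean) UNIV) euclidean (\<lambda>g. g x)"
  using continuous_map_product_projection[of x UNIV "\<lambda>_. euclidean"] by simp

lemma topspace_prodE: "topspace (product_topology (\<lambda>_. (euclidean :: complex topology)) (UNIV :: 'a set)) = UNIV"
  by (auto simp: PiE_def extensional_def)

context mainctx
begin

lemma d23:
  assumes two: "S \<inter> strong_radical smB TB C = {0}"
  shows "(\<lambda>f. f \<circ> \<Phi>) ` MC = Mstar smA"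
proof -
  obtain PB where PB: "\<forall>p\<in>PB. seminorm smB p" and detB: "determined_by TB PB"
    using PB_ex by blast
  obtain F e where Fe: "finite F" "F \<subseteq> PB" "e > 0" and bnd: "\<forall>f\<in>MC. \<forall>y\<in>C. cmod (f y) \<le> QF F y / e"
    using Qbound[OF PB detB] by (elim exE conjE)
  define bd where "bd x = QF F (\<Phi> x) / e" for x
  define K2 where "K2 = {g. (\<forall>x y. g (x + y) = g x + g y) \<and> (\<forall>c x. g (smA c x) = c * g x) \<and>
       (\<forall>x y. g (x * y) = g x * g y) \<and> g 1 = 1 \<and> (\<forall>x. cmod (g x) \<le> bd x)}"
  have PC: "\<Phi> x \<in> C" for x using SC by blast
  have img: "(\<lambda>f. f \<circ> \<Phi>) ` MC = K2"
  proof (rule equalityI)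
    show "(\<lambda>f. f \<circ> \<Phi>) ` MC \<subseteq> K2"
    proof
      fix g assume "g \<in> (\<lambda>f. f \<circ> \<Phi>) ` MC"
      then obtain f where f: "f \<in> MC" "g = f \<circ> \<Phi>" by blast
      have gM: "g \<in> Mstar smA" using comp_Mstar[OF f(1)] f(2) by simp
      have "cmod (g x) \<le> bd x" for x using bnd f PC by (simp add: bd_def)
      then show "g \<in> K2" using gM Mstar_one[OF gM] unfolding K2_def Mstar_def by blast
    qed
    show "K2 \<subseteq> (\<lambda>f. f \<circ> \<Phi>) ` MC"
    proof
      fix g assume gK: "g \<in> K2"
      have gadd: "g (u + v) = g u + g v" for u v using gK by (simp add: K2_def)
      have gsm: "g (smA a u) = a * g u" for a u using gK by (simp add: K2_def)
      have gmul: "g (u * v) = g u * g v" for u v using gK by (simp add: K2_def)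
      have g1: "g 1 = 1" using gK by (simp add: K2_def)
      have gb: "cmod (g u) \<le> bd u" for u using gK by (simp add: K2_def)
      define h where "h = g \<circ> inv \<Phi>"
      have hP: "h (\<Phi> y) = g y" for y by (simp add: h_def inv_Phi)
      have "\<exists>f\<in>M_sub smB TB (TB closure_of S). \<forall>b\<in>S. f b = h b"
      proof (rule extend[OF cB topB PB(1) detB B(2) _ _ _ S1 _ _ _ _ Fe(1,2)])
        show "\<And>x y. x \<in> S \<Longrightarrow> y \<in> S \<Longrightarrow> x + y \<in> S" by (rule Sadd)
        show "\<And>x y. x \<in> S \<Longrightarrow> y \<in> S \<Longrightarrow> x * y \<in> S" by (rule Smul)
        show "\<And>a x. x \<in> S \<Longrightarrow> smB a x \<in> S" by (rule Ssm)
        show "\<And>x y. x \<in> S \<Longrightarrow> y \<in> S \<Longrightarrow> h (x + y) = h x + h y"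
          by (auto simp flip: Phi_add simp: hP gadd)
        show "\<And>a x. x \<in> S \<Longrightarrow> h (smB a x) = a * h x"
          by (auto simp flip: Phi_sm simp: hP gsm)
        show "\<And>x y. x \<in> S \<Longrightarrow> y \<in> S \<Longrightarrow> h (x * y) = h x * h y"
          by (auto simp flip: Phi_mul simp: hP gmul)
        show "h 1 = 1" using hP[of 1] Phi_1 g1 by simp
        show "0 < 1 / e" using Fe(3) by simp
        show "\<And>b. b \<in> S \<Longrightarrow> cmod (h b) \<le> 1 / e * QF F b" using gb hP by (auto simp: bd_def)
      qed
      then obtain f where f: "f \<in> MC" "\<forall>b\<in>S. f b = h b" by blast
      have "g = f \<circ> \<Phi>" using f(2) hP by (auto simp: fun_eq_iff)
      then show "g \<in> (\<lambda>f. f \<circ> \<Phi>) ` MC" using f(1) by blast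
    qed
  qed
  define X where "X = product_topology (\<lambda>_. (euclidean :: complex topology)) (UNIV :: 'a set)"
  have tX: "topspace X = UNIV" unfolding X_def by (rule topspace_prodE)
  have pc: "continuous_map X euclidean (\<lambda>g. g x)" for x unfolding X_def by (rule proj_cont)
  have cl: "closedin X K2"
  proof -
    have c1: "closedin X {g \<in> topspace X. \<forall>x y. g (x + y) - (g x + g y) = 0}"
      by (intro closedin_all closedin_eq0 continuous_map_diff continuous_map_add pc)
    have c2: "closedin X {g \<in> topspace X. \<forall>c x. g (smA c x) - c * g x = 0}"
      by (intro closedin_all closedin_eq0 continuous_map_diff cmap_cmult pc)
    have c3: "closedin X {g \<in> topspace X. \<forall>x y. g (x * y) - g x * g y = 0}"
      by (intro closedin_all closedin_eq0 continuous_map_diff cmap_mult pc)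
    have c4: "closedin X {g \<in> topspace X. g 1 - 1 = 0}"
      by (intro closedin_eq0 continuous_map_diff pc continuous_map_const[THEN iffD2]) simp
    have c5: "closedin X {g \<in> topspace X. \<forall>x. cmod (g x) \<le> bd x}"
      by (intro closedin_all closedin_le continuous_map_norm pc)
    have "K2 = {g \<in> topspace X. \<forall>x y. g (x + y) - (g x + g y) = 0} \<inter> {g \<in> topspace X. \<forall>c x. g (smA c x) - c * g x = 0}
       \<inter> {g \<in> topspace X. \<forall>x y. g (x * y) - g x * g y = 0} \<inter> {g \<in> topspace X. g 1 - 1 = 0}
       \<inter> {g \<in> topspace X. \<forall>x. cmod (g x) \<le> bd x}"
      unfolding K2_def tX by auto
    then show ?thesis using c1 c2 c3 c4 c5 by (simp add: closedin_Int)
  qed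
  have K2M: "K2 \<subseteq> Mstar smA" unfolding K2_def Mstar_def by (auto intro: exI[of _ 1])
  have comp: "compactin (weak_star smA) K2"
  proof -
    define Box where "Box = PiE (UNIV :: 'a set) (\<lambda>x. cball (0::complex) (bd x))"
    have "compactin X Box" unfolding X_def Box_def compactin_PiE by simp
    moreover have "K2 \<subseteq> Box" unfolding K2_def Box_def by (auto simp: PiE_def extensional_def)
    ultimately have "compactin X K2" using cl by (rule closed_compactin)
    then show ?thesis unfolding weak_star_def X_def compactin_subtopology using K2M X_def by simp
  qed
  show ?thesis
  proof (rule ccontr)
    assume ne: "(\<lambda>f. f \<circ> \<Phi>) ` MC \<noteq> Mstar smA"
    then have "K2 \<subset> Mstar smA" using img K2M by auto
    then have "\<exists>x. x \<noteq> 0 \<and> (\<forall>f\<in>K2. f x = 0)"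
      by (rule A(2)[unfolded weakly_sigma_star_compact_regular_def, rule_format, OF conjI[OF comp]])
    then obtain x where x: "x \<noteq> 0" "\<forall>f\<in>K2. f x = 0" by (elim exE conjE)
    have "\<forall>f\<in>MC. f (\<Phi> x) = 0"
    proof
      fix f assume "f \<in> MC"
      then have "f \<circ> \<Phi> \<in> K2" using img by blast
      then show "f (\<Phi> x) = 0" using x(2) by auto
    qed
    then have "\<Phi> x \<in> S \<inter> strong_radical smB TB C" using PC by (simp add: strong_radical_def)
    then have "\<Phi> x = \<Phi> 0" using two Phi_0 by simp
    then have "x = 0" using hom(2) by (simp add: inj_eq)
    then show False using x(1) by simp
  qed
qed

end




context mainctx
begin

lemma d31:
  assumes three: "(\<lambda>f. f \<circ> \<Phi>) ` MC = Mstar smA"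
  shows "continuous_map (subtopology TB S) TA (inv \<Phi>)"
proof -
  obtain PA where PA: "\<forall>p\<in>PA. uniform_seminorm smA p" and detA: "determined_by TA PA"
    using PA_ex by blast
  obtain PB where PB: "\<forall>p\<in>PB. seminorm smB p" and detB: "determined_by TB PB"
    using PB_ex by blast
  have snA: "\<forall>p\<in>PA. seminorm smA p" using PA us_sn by blast
  obtain F e where Fe: "finite F" "F \<subseteq> PB" "e > 0" and bnd: "\<forall>f\<in>MC. \<forall>y\<in>C. cmod (f y) \<le> QF F y / e"
    using Qbound[OF PB detB] by (elim exE conjE)
  have snF: "\<forall>q\<in>F. seminorm smB q" using PB Fe(2) by (auto simp: subset_iff)
  have Qs: "seminorm smB (QF F)" by (rule QF_sn[OF Fe(1) snF])
  have PC: "\<Phi> x \<in> C" for x using SC by blast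
  have key: "p x \<le> QF F (\<Phi> x) / e" if p: "p \<in> PA" for p x
  proof (cases "p x > 0")
    case False
    then have "p x \<le> 0" by simp
    moreover have "0 \<le> QF F (\<Phi> x) / e" using sn_nonneg[OF Qs] Fe(3) by simp
    ultimately show ?thesis by linarith
  next
    case True
    have up: "uniform_seminorm smA p" using PA p by blast
    obtain g where g: "g \<in> Mstar smA" and gx: "cmod (g x) = p x"
      using gelfand[OF cA up True] by blast
    then have "g \<in> (\<lambda>f. f \<circ> \<Phi>) ` MC" using three by simp
    then obtain f where f: "f \<in> MC" "g = f \<circ> \<Phi>" by blast
    have "cmod (f (\<Phi> x)) \<le> QF F (\<Phi> x) / e" using bnd f(1) PC by blast
    then show ?thesis using gx f(2) by simp
  qed
  show ?thesis
    unfolding continuous_map_def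
  proof (intro conjI allI impI)
    show "inv \<Phi> \<in> topspace (subtopology TB S) \<rightarrow> topspace TA" by (simp add: tspA)
    fix U assume U: "openin TA U"
    show "openin (subtopology TB S) {b \<in> topspace (subtopology TB S). inv \<Phi> b \<in> U}"
    proof (subst openin_subopen, intro ballI)
      fix b0 assume "b0 \<in> {b \<in> topspace (subtopology TB S). inv \<Phi> b \<in> U}"
      then have b0S: "b0 \<in> S" and b0U: "inv \<Phi> b0 \<in> U" by (auto simp: tspB)
      then obtain x0 where x0: "b0 = \<Phi> x0" by blast
      have x0U: "x0 \<in> U" using b0U x0 inv_Phi by simp
      from nbhd[OF detA snA U x0U] obtain F' \<epsilon> where F': "finite F'" "F' \<subseteq> PA" "\<epsilon> > 0"
        "{y. QF F' (y - x0) < \<epsilon>} \<subseteq> U" by (elim exE conjE)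
      define n where "n = real (card F')"
      have n0: "n \<ge> 0" by (simp add: n_def)
      define r where "r = e * \<epsilon> / (n + 1)"
      have r: "r > 0" using Fe(3) F'(3) n0 by (simp add: r_def)
      define T where "T = S \<inter> {y. QF F (y - b0) < r}"
      have "openin (subtopology TB S) T" unfolding T_def
        by (rule openin_subtopology_Int2[OF ball_open[OF cB detB PB Fe(1,2)]])
      moreover have "b0 \<in> T" using b0S r sn_zero[OF cB Qs] by (simp add: T_def)
      moreover have "T \<subseteq> {b \<in> topspace (subtopology TB S). inv \<Phi> b \<in> U}"
      proof
        fix b assume "b \<in> T"
        then have bS: "b \<in> S" and bq: "QF F (b - b0) < r" by (auto simp: T_def)
        then obtain x where bx: "b = \<Phi> x" by blast
        have "QF F' (x - x0) = (\<Sum>p\<in>F'. p (x - x0))" by (simp add: QF_def)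
        also have "\<dots> \<le> (\<Sum>p\<in>F'. QF F (b - b0) / e)"
        proof (rule sum_mono)
          fix p assume "p \<in> F'"
          then have "p \<in> PA" using F'(2) by blast
          from key[OF this, of "x - x0"] show "p (x - x0) \<le> QF F (b - b0) / e"
            using bx x0 by (simp add: Phi_diff)
        qed
        also have "\<dots> = n * (QF F (b - b0) / e)" by (simp add: n_def)
        also have "\<dots> \<le> n * (\<epsilon> / (n + 1))"
        proof (rule mult_left_mono[OF _ n0])
          show "QF F (b - b0) / e \<le> \<epsilon> / (n + 1)" using bq Fe(3) n0
            by (simp add: r_def field_simps)
        qed
        also have "\<dots> < \<epsilon>" using F'(3) n0 by (simp add: field_simps)
        finally have "x \<in> U" using F'(4) by auto
        then show "b \<in> {b \<in> topspace (subtopology TB S). inv \<Phi> b \<in> U}"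
          using bS bx inv_Phi by (simp add: tspB)
      qed
      ultimately show "\<exists>T. openin (subtopology TB S) T \<and> b0 \<in> T \<and> T \<subseteq> {b \<in> topspace (subtopology TB S). inv \<Phi> b \<in> U}"
        by (intro exI[of _ T] conjI)
    qed
  qed
qed

lemma main:
  "(continuous_map (subtopology TB (range \<Phi>)) TA (inv \<Phi>)
            \<longleftrightarrow> range \<Phi> \<inter> strong_radical smB TB (TB closure_of range \<Phi>) = {0})
       \<and> (range \<Phi> \<inter> strong_radical smB TB (TB closure_of range \<Phi>) = {0}
            \<longleftrightarrow> (\<lambda>f. f \<circ> \<Phi>) ` M_sub smB TB (TB closure_of range \<Phi>) = Mstar smA)"
  using d12 d23 d31 by blast

end

theorem theorem3p2:
  fixes smA :: "complex \<Rightarrow> 'a::comm_ring_1 \<Rightarrow> 'a" and TA :: "'a topology"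
    and smB :: "complex \<Rightarrow> 'b::comm_ring_1 \<Rightarrow> 'b" and TB :: "'b topology"
    and \<Phi> :: "'a \<Rightarrow> 'b"
  assumes A: "uT_alg smA TA" "weakly_sigma_star_compact_regular smA"
    and B: "locally_convex_alg smB TB"
           "continuous_map (prod_topology TB TB) TB (\<lambda>(x, y). x * y)"
    and hom: "alg_hom smA smB \<Phi>" "inj \<Phi>"
    and Q: "Q_sub TB (TB closure_of range \<Phi>)"
  shows "(continuous_map (subtopology TB (range \<Phi>)) TA (inv \<Phi>)
            \<longleftrightarrow> range \<Phi> \<inter> strong_radical smB TB (TB closure_of range \<Phi>) = {0})
       \<and> (range \<Phi> \<inter> strong_radical smB TB (TB closure_of range \<Phi>) = {0}
            \<longleftrightarrow> (\<lambda>f. f \<circ> \<Phi>) ` M_sub smB TB (TB closure_of range \<Phi>) = Mstar smA)"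
proof -
  interpret mainctx smA TA smB TB \<Phi> using assms by unfold_locales
  show ?thesis by (rule main)
qed



end
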